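(* Let $c\ge 1$ be an integer and $\lambda_1,\lambda_2,\mu_1,\mu_2>0$. Let $X$ be the continuous-time Markov chain on $\mathbb{N}_0^2$ described in the context, started at $X(0)=(0,0)$, and let $\pi_x(\alpha)$, $x\in\mathbb{N}_0^2$, $\mathrm{Re}\,\alpha>0$, be the Laplace transforms of its transition functions. Fix $\alpha$ with $\mathrm{Re}\,\alpha>0$ and define numbers $\{v_{i,j}\}_{i\ge j\ge 0}$ recursively by $v_{0,0}=\pi_{(0,c-1)}(\alpha)$ and, for $i\ge 0$, $$v_{i+1,0}=\pi_{(i+1,c-1)}(\alpha),\qquad v_{i+1,j}=R_1\Bigl(v_{i,j-1}+R_2\sum_{k=j}^{i}v_{i,k}\Bigr),\quad 1\le j\le i+1.$$ Then for all $i\ge 0$ and $j\ge 1$, $$\pi_{(i,c-1+j)}(\alpha)=\sum_{k=0}^{i}v_{i,k}\,(1-R_2)^k\binom{j-1+k}{k}r_2^{\,j}.$$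
   Context: The Markov chain $X=\{(X_1(t),X_2(t))\}_{t\ge0}$ on $\mathbb{N}_0^2$ has as its only nonzero off-diagonal transition rates: $q((i,j),(i+1,j))=\lambda_1$ ($i,j\ge0$); $q((i,j),(i,j+1))=\lambda_2$ ($i,j\ge0$); $q((i,j),(i-1,j))=\max(\min(i,c-j),0)\mu_1$ ($i\ge1$, $j\ge0$); $q((i,j),(i,j-1))=\min(c,j)\mu_2$ ($i\ge0$, $j\ge1$). (It models an $M/M/c$ queue with two classes, class 2 having preemptive-resume priority over class 1; $X_n(t)$ is the number of class-$n$ customers.) For $x\in\mathbb{N}_0^2$, $p_x(t)=P(X(t)=x\mid X(0)=(0,0))$ and $\pi_x(\alpha)=\int_0^\infty e^{-\alpha t}p_x(t)\,dt$ for $\mathrm{Re}\,\alpha>0$. For $\lambda,\mu>0$, $\phi_{\lambda,\mu}(s)=E[e^{-sB}]=\frac{\lambda+\mu+s-\sqrt{(\lambda+\mu+s)^2-4\lambda\mu}}{2\lambda}$ is the Laplace–Stieltjes transform of the busy period $B$ of an $M/M/1$ queue with arrival rate $\lambda$ and service rate $\mu$ started by one customer. Set $\rho_2=\lambda_2/(c\mu_2)$, $\phi_2=\phi_{\lambda_2,c\mu_2}(\lambda_1+\alpha)$, $r_2=\rho_2\phi_2$, $\Omega_2=\frac{\rho_2\phi_2}{\lambda_2(1-\rho_2\phi_2^2)}$, $R_1=\frac{\lambda_1\Omega_2}{1-r_2\phi_2}$, $R_2=r_2\phi_2$. Empty sums are zero. *)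

theory Defs
  imports "HOL-Analysis.Analysis"
begin

text \<open>Transition rates of the two-class preemptive-priority M/M/c chain on N0^2.
  Parameters: l1 l2 (arrival rates), m1 m2 (service rates), c (servers).
  Note min i (c - j) uses truncated nat subtraction, i.e. max(min(i,c-j),0).\<close>

definition rate :: "real \<Rightarrow> real \<Rightarrow> real \<Rightarrow> real \<Rightarrow> nat \<Rightarrow> nat \<times> nat \<Rightarrow> nat \<times> nat \<Rightarrow> real" where
  "rate l1 l2 m1 m2 c x y =
     (let i = fst x; j = snd x in
      if y = (i + 1, j) then l1
      else if y = (i, j + 1) then l2
      else if i \<ge> 1 \<and> y = (i - 1, j) then real (min i (c - j)) * m1
      else if j \<ge> 1 \<and> y = (i, j - 1) then real (min c j) * m2
      else 0)"

definition outrate :: "real \<Rightarrow> real \<Rightarrow> real \<Rightarrow> real \<Rightarrow> nat \<Rightarrow> nat \<times> nat \<Rightarrow> real" where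
  "outrate l1 l2 m1 m2 c x =
     l1 + l2 + real (min (fst x) (c - snd x)) * m1 + real (min c (snd x)) * m2"

text \<open>Uniformization constant (a bound on all outflow rates).\<close>
definition unif :: "real \<Rightarrow> real \<Rightarrow> real \<Rightarrow> real \<Rightarrow> nat \<Rightarrow> real" where
  "unif l1 l2 m1 m2 c = l1 + l2 + real c * (m1 + m2)"

definition jump :: "real \<Rightarrow> real \<Rightarrow> real \<Rightarrow> real \<Rightarrow> nat \<Rightarrow> nat \<times> nat \<Rightarrow> nat \<times> nat \<Rightarrow> real" where
  "jump l1 l2 m1 m2 c x y =
     (if x = y then 1 - outrate l1 l2 m1 m2 c x / unif l1 l2 m1 m2 c
      else rate l1 l2 m1 m2 c x y / unif l1 l2 m1 m2 c)"

text \<open>n-step distribution of the uniformized jump chain started at (0,0).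
  All predecessors of y lie in the box {0..fst y+1} x {0..snd y+1}.\<close>
fun Pn :: "real \<Rightarrow> real \<Rightarrow> real \<Rightarrow> real \<Rightarrow> nat \<Rightarrow> nat \<Rightarrow> nat \<times> nat \<Rightarrow> real" where
  "Pn l1 l2 m1 m2 c 0 y = (if y = (0, 0) then 1 else 0)"
| "Pn l1 l2 m1 m2 c (Suc n) y =
     (\<Sum>x \<in> {0..fst y + 1} \<times> {0..snd y + 1}. Pn l1 l2 m1 m2 c n x * jump l1 l2 m1 m2 c x y)"

text \<open>Transition function p_x(t) = P(X(t) = x | X(0) = (0,0)), via uniformization
  (the rates are bounded, so this is the unique transition function, exp(tQ)).\<close>
definition ptrans :: "real \<Rightarrow> real \<Rightarrow> real \<Rightarrow> real \<Rightarrow> nat \<Rightarrow> nat \<times> nat \<Rightarrow> real \<Rightarrow> real" where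
  "ptrans l1 l2 m1 m2 c x t =
     (\<Sum>n. exp (- unif l1 l2 m1 m2 c * t) * (unif l1 l2 m1 m2 c * t) ^ n / fact n
          * Pn l1 l2 m1 m2 c n x)"

definition piLT :: "real \<Rightarrow> real \<Rightarrow> real \<Rightarrow> real \<Rightarrow> nat \<Rightarrow> nat \<times> nat \<Rightarrow> complex \<Rightarrow> complex" where
  "piLT l1 l2 m1 m2 c x \<alpha> =
     integral {0..} (\<lambda>t::real. exp (- \<alpha> * complex_of_real t) * complex_of_real (ptrans l1 l2 m1 m2 c x t))"

text \<open>Busy-period LST of M/M/1 (principal complex square root; this is the correct
  branch for Re s > 0).\<close>
definition phiBP :: "real \<Rightarrow> real \<Rightarrow> complex \<Rightarrow> complex" where
  "phiBP l m s = (of_real l + of_real m + s - csqrt ((of_real l + of_real m + s)\<^sup>2 - 4 * of_real l * of_real m))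
                 / (2 * of_real l)"

definition rho2 :: "real \<Rightarrow> real \<Rightarrow> nat \<Rightarrow> real" where
  "rho2 l2 m2 c = l2 / (real c * m2)"

definition phi2 :: "real \<Rightarrow> real \<Rightarrow> real \<Rightarrow> nat \<Rightarrow> complex \<Rightarrow> complex" where
  "phi2 l1 l2 m2 c \<alpha> = phiBP l2 (real c * m2) (of_real l1 + \<alpha>)"

definition r2 :: "real \<Rightarrow> real \<Rightarrow> real \<Rightarrow> nat \<Rightarrow> complex \<Rightarrow> complex" where
  "r2 l1 l2 m2 c \<alpha> = of_real (rho2 l2 m2 c) * phi2 l1 l2 m2 c \<alpha>"

definition Omega2 :: "real \<Rightarrow> real \<Rightarrow> real \<Rightarrow> nat \<Rightarrow> complex \<Rightarrow> complex" where
  "Omega2 l1 l2 m2 c \<alpha> = of_real (rho2 l2 m2 c) * phi2 l1 l2 m2 c \<alpha>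
     / (of_real l2 * (1 - of_real (rho2 l2 m2 c) * (phi2 l1 l2 m2 c \<alpha>)\<^sup>2))"

definition R1 :: "real \<Rightarrow> real \<Rightarrow> real \<Rightarrow> nat \<Rightarrow> complex \<Rightarrow> complex" where
  "R1 l1 l2 m2 c \<alpha> = of_real l1 * Omega2 l1 l2 m2 c \<alpha>
     / (1 - r2 l1 l2 m2 c \<alpha> * phi2 l1 l2 m2 c \<alpha>)"

definition R2 :: "real \<Rightarrow> real \<Rightarrow> real \<Rightarrow> nat \<Rightarrow> complex \<Rightarrow> complex" where
  "R2 l1 l2 m2 c \<alpha> = r2 l1 l2 m2 c \<alpha> * phi2 l1 l2 m2 c \<alpha>"

text \<open>The numbers v_{i,j} (i >= j >= 0); given pi, R1, R2, c. Values with j > i are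
  set to 0 and never used.\<close>
fun vseq :: "(nat \<times> nat \<Rightarrow> complex) \<Rightarrow> complex \<Rightarrow> complex \<Rightarrow> nat \<Rightarrow> nat \<Rightarrow> nat \<Rightarrow> complex" where
  "vseq p a b c 0 j = (if j = 0 then p (0, c - 1) else 0)"
| "vseq p a b c (Suc i) j =
     (if j = 0 then p (Suc i, c - 1)
      else if j \<le> Suc i then a * (vseq p a b c i (j - 1) + b * (\<Sum>k = j..i. vseq p a b c i k))
      else 0)"

end

theory Submission imports Defs "HOL-Real_Asymp.Real_Asymp" begin


fun Qp :: "complex \<Rightarrow> nat \<Rightarrow> complex \<Rightarrow> complex" where
  "Qp b 0 z = 1 / b"
| "Qp b (Suc n) z = (z ^ Suc n + of_nat (Suc n) * Qp b n z) / b"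

lemma Qp_deriv:
  "b \<noteq> 0 \<Longrightarrow> (Qp b (Suc n) has_field_derivative (of_nat (Suc n) * Qp b n z)) (at z)"
proof (induction n arbitrary: z)
  case 0
  then show ?case by (auto intro!: derivative_eq_intros simp: field_simps)
next
  case (Suc n)
  have "(Qp b (Suc (Suc n)) has_field_derivative
     (of_nat (Suc (Suc n)) * z ^ Suc n + of_nat (Suc (Suc n)) * (of_nat (Suc n) * Qp b n z)) / b) (at z)"
    unfolding Qp.simps(2)[of b "Suc n"]
    by (rule derivative_eq_intros Suc refl)+ (use Suc in \<open>simp add: field_simps\<close>)
  moreover have "(of_nat (Suc (Suc n)) * z ^ Suc n + of_nat (Suc (Suc n)) * (of_nat (Suc n) * Qp b n z)) / b
     = of_nat (Suc (Suc n)) * Qp b (Suc n) z" using Suc.prems by (simp add: field_simps)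
  ultimately show ?case by (simp only:)
qed

lemma Qp_eq: "b * Qp b n z - (if n = 0 then 0 else of_nat n * Qp b (n - 1) z) = z ^ n" if "b \<noteq> 0"
  using that by (cases n) (auto simp: field_simps)

lemma Qp_0: "b \<noteq> 0 \<Longrightarrow> Qp b n 0 = fact n / b ^ Suc n"
  by (induction n) (auto simp: field_simps)

lemma F_deriv:
  assumes "b \<noteq> 0"
  shows "((\<lambda>z. - exp (- b * z) * Qp b n z) has_field_derivative exp (- b * z) * z ^ n) (at z)"
proof -
  have d: "(Qp b n has_field_derivative (if n = 0 then 0 else of_nat n * Qp b (n - 1) z)) (at z)"
  proof (cases n)
    case 0
    have "Qp b 0 = (\<lambda>_. 1 / b)" by auto
    then show ?thesis using 0 by simp
  qed (use Qp_deriv[OF assms] in auto)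
  have "((\<lambda>z. - exp (- b * z) * Qp b n z) has_field_derivative
       - (exp (- b * z) * (- b)) * Qp b n z - exp (- b * z) * (if n = 0 then 0 else of_nat n * Qp b (n - 1) z)) (at z)"
    by (rule derivative_eq_intros d refl)+ simp
  moreover have "- (exp (- b * z) * (- b)) * Qp b n z - exp (- b * z) * (if n = 0 then 0 else of_nat n * Qp b (n - 1) z)
     = exp (- b * z) * (b * Qp b n z - (if n = 0 then 0 else of_nat n * Qp b (n - 1) z))"
    by (simp add: algebra_simps)
  ultimately show ?thesis using Qp_eq[OF assms] by simp
qed

lemma pow_le_exp: "0 \<le> (x::real) \<Longrightarrow> x ^ n / fact n \<le> exp x"
proof -
  assume x: "0 \<le> x"
  have s: "summable (\<lambda>k. x ^ k / fact k)"
    using exp_converges[of x] by (simp add: sums_iff divide_inverse_commute scaleR_conv_of_real)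
  have "x ^ n / fact n = (\<Sum>k\<in>{n}. x ^ k / fact k)" by simp
  also have "\<dots> \<le> (\<Sum>k. x ^ k / fact k)"
    by (rule sum_le_suminf[OF s]) (use x in auto)
  also have "\<dots> = exp x"
    using exp_converges[of x] by (simp add: sums_iff divide_inverse_commute scaleR_conv_of_real)
  finally show ?thesis .
qed

lemma partial_exp_le: "0 \<le> (x::real) \<Longrightarrow> (\<Sum>k<N. x ^ k / fact k) \<le> exp x"
proof -
  assume x: "0 \<le> x"
  have s: "summable (\<lambda>k. x ^ k / fact k)"
    using exp_converges[of x] by (simp add: sums_iff divide_inverse_commute scaleR_conv_of_real)
  have "(\<Sum>k<N. x ^ k / fact k) \<le> (\<Sum>k. x ^ k / fact k)"
    by (rule sum_le_suminf[OF s]) (use x in auto)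
  also have "\<dots> = exp x"
    using exp_converges[of x] by (simp add: sums_iff divide_inverse_commute scaleR_conv_of_real)
  finally show ?thesis .
qed

lemma Qp_bound:
  assumes "b \<noteq> 0"
  shows "\<exists>A. \<forall>t\<ge>0. norm (Qp b n (of_real t)) \<le> A * (1 + t) ^ n"
proof (induction n)
  case 0
  show ?case by (rule exI[of _ "1 / norm b"]) (simp add: norm_divide)
next
  case (Suc n)
  then obtain A where A: "\<And>t. t \<ge> 0 \<Longrightarrow> norm (Qp b n (of_real t)) \<le> A * (1 + t) ^ n" by blast
  have "norm (Qp b (Suc n) (of_real t)) \<le> ((1 + real (Suc n) * \<bar>A\<bar>) / norm b) * (1 + t) ^ Suc n" if t: "t \<ge> 0" for t
  proof -
    have "norm (Qp b (Suc n) (of_real t)) = norm (of_real t ^ Suc n + of_nat (Suc n) * Qp b n (of_real t)) / norm b"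
      by (simp add: norm_divide)
    also have "\<dots> \<le> (t ^ Suc n + real (Suc n) * (A * (1 + t) ^ n)) / norm b"
    proof (rule divide_right_mono)
      have "norm (of_real t ^ Suc n + of_nat (Suc n) * Qp b n (of_real t)) \<le> norm (of_real t ^ Suc n :: complex) + norm (of_nat (Suc n) * Qp b n (of_real t))"
        by (rule norm_triangle_ineq)
      also have "\<dots> \<le> t ^ Suc n + real (Suc n) * (A * (1 + t) ^ n)"
      proof -
        have "norm (of_nat (Suc n) * Qp b n (of_real t)) = real (Suc n) * norm (Qp b n (of_real t))"
          by (simp only: norm_mult norm_of_nat)
        also have "\<dots> \<le> real (Suc n) * (A * (1 + t) ^ n)"
          using A[OF t] by (intro mult_left_mono) auto
        finally have X: "norm (of_nat (Suc n) * Qp b n (of_real t)) \<le> real (Suc n) * (A * (1 + t) ^ n)" .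
        have n1: "norm (complex_of_real t ^ Suc n) = t ^ Suc n" by (simp only: norm_power norm_of_real abs_of_nonneg[OF t])
        show ?thesis using X n1 by linarith
      qed
      finally show "norm (of_real t ^ Suc n + of_nat (Suc n) * Qp b n (of_real t)) \<le> t ^ Suc n + real (Suc n) * (A * (1 + t) ^ n)" .
    qed simp
    also have "\<dots> \<le> ((1 + real (Suc n) * \<bar>A\<bar>) * (1 + t) ^ Suc n) / norm b"
    proof (rule divide_right_mono)
      have "t ^ Suc n \<le> (1 + t) ^ Suc n" using t by (intro power_mono) auto
      moreover have "A * (1 + t) ^ n \<le> \<bar>A\<bar> * (1 + t) ^ Suc n"
      proof -
        have "A * (1 + t) ^ n \<le> \<bar>A\<bar> * (1 + t) ^ n" using t by (intro mult_right_mono) auto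
        also have "\<dots> \<le> \<bar>A\<bar> * (1 + t) ^ Suc n" using t by (intro mult_left_mono) (auto intro!: power_increasing)
        finally show ?thesis .
      qed
      moreover have "real (Suc n) * (A * (1 + t) ^ n) \<le> real (Suc n) * (\<bar>A\<bar> * (1 + t) ^ Suc n)"
        using calculation(2) by (rule mult_left_mono) simp
      moreover have "(1 + real (Suc n) * \<bar>A\<bar>) * (1 + t) ^ Suc n = (1 + t) ^ Suc n + real (Suc n) * (\<bar>A\<bar> * (1 + t) ^ Suc n)"
        by (simp only: algebra_simps)
      ultimately show "t ^ Suc n + real (Suc n) * (A * (1 + t) ^ n) \<le> (1 + real (Suc n) * \<bar>A\<bar>) * (1 + t) ^ Suc n"
        by linarith
    qed simp
    finally show ?thesis by simp
  qed
  then show ?case by blast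
qed

lemma termint:
  assumes b: "Re b > 0"
  shows "((\<lambda>t::real. exp (- b * of_real t) * of_real t ^ n) has_integral fact n / b ^ Suc n) {0..}"
proof -
  have b0: "b \<noteq> 0" using b by auto
  define \<sigma> where "\<sigma> = Re b"
  have s: "\<sigma> > 0" using b by (simp add: \<sigma>_def)
  define e where "e = (\<lambda>t::real. exp (- b * of_real t) * of_real t ^ n)"
  define F where "F = (\<lambda>z. - exp (- b * z) * Qp b n z)"
  have FTC: "(e has_integral (F (of_real T) - F (of_real 0))) {0..T}" if "T \<ge> 0" for T
  proof -
    have "\<And>t. t \<in> {0..T} \<Longrightarrow> ((F \<circ> of_real) has_vector_derivative e t) (at t within {0..T})"
      unfolding e_def F_def
      by (rule has_complex_derivative_imp_has_vector_derivative, rule has_field_derivative_at_within, rule F_deriv[OF b0])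
    then show ?thesis using that by (intro fundamental_theorem_of_calculus) (auto simp: o_def)
  qed
  have F0: "F (of_real 0) = - (fact n / b ^ Suc n)" by (simp add: F_def Qp_0[OF b0])
  define D where "D = fact n * (2 / \<sigma>) ^ n"
  have Dpos: "D > 0" using s by (simp add: D_def)
  have tpow: "t ^ n \<le> D * exp (\<sigma> / 2 * t)" if "t \<ge> 0" for t
  proof -
    have "(\<sigma> / 2 * t) ^ n / fact n \<le> exp (\<sigma> / 2 * t)" using that s by (intro pow_le_exp) auto
    then have "(\<sigma> / 2) ^ n * t ^ n \<le> fact n * exp (\<sigma> / 2 * t)"
      by (simp add: field_simps power_mult_distrib)
    then show ?thesis using s unfolding D_def
      by (simp add: field_simps power_divide)
  qed
  have norm_e: "norm (e t) \<le> D * exp (- (\<sigma> / 2) * t)" if "t \<ge> 0" for t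
  proof -
    have "norm (e t) = exp (- \<sigma> * t) * t ^ n" using that
      by (simp add: e_def norm_mult norm_power \<sigma>_def)
    also have "\<dots> \<le> exp (- \<sigma> * t) * (D * exp (\<sigma> / 2 * t))"
      using tpow[OF that] by (intro mult_left_mono) auto
    also have "\<dots> = D * exp (- (\<sigma> / 2) * t)"
    proof -
      have "exp (- \<sigma> * t) * exp (\<sigma> / 2 * t) = exp (- (\<sigma> / 2) * t)"
        by (subst exp_add[symmetric]) (simp add: field_simps)
      then show ?thesis by (metis mult.left_commute)
    qed
    finally show ?thesis .
  qed
  obtain A where A: "\<And>t. t \<ge> 0 \<Longrightarrow> norm (Qp b n (of_real t)) \<le> A * (1 + t) ^ n"
    using Qp_bound[OF b0, of n] by blast
  have Flim: "((\<lambda>k::nat. F (of_real (real k))) \<longlongrightarrow> 0) sequentially"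
  proof (rule Lim_null_comparison)
    show "\<forall>\<^sub>F k in sequentially. norm (F (of_real (real k))) \<le> \<bar>A\<bar> * D * exp (\<sigma>/2) * exp (- (\<sigma> / 2) * real k)"
    proof (intro always_eventually allI)
      fix k :: nat
      define t where "t = real k"
      have t: "t \<ge> 0" by (simp add: t_def)
      have "norm (F (of_real t)) = exp (- \<sigma> * t) * norm (Qp b n (of_real t))"
        by (simp add: F_def norm_mult \<sigma>_def)
      also have "\<dots> \<le> exp (- \<sigma> * t) * (\<bar>A\<bar> * (1 + t) ^ n)"
      proof (rule mult_left_mono)
        have "A * (1 + t) ^ n \<le> \<bar>A\<bar> * (1 + t) ^ n" using t by (intro mult_right_mono) auto
        then show "norm (Qp b n (of_real t)) \<le> \<bar>A\<bar> * (1 + t) ^ n" using A[OF t] by linarith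
      qed simp
      also have "\<dots> \<le> exp (- \<sigma> * t) * (\<bar>A\<bar> * (D * exp (\<sigma> / 2 * (1 + t))))"
        using tpow[of "1 + t"] t by (intro mult_left_mono) auto
      also have "\<dots> = \<bar>A\<bar> * D * exp (\<sigma>/2) * exp (- (\<sigma> / 2) * t)"
      proof -
        have "exp (- \<sigma> * t) * exp (\<sigma> / 2 * (1 + t)) = exp (\<sigma>/2) * exp (- (\<sigma> / 2) * t)"
          by (subst exp_add[symmetric])+ (simp add: field_simps)
        then show ?thesis by (metis mult.left_commute mult.assoc mult.commute)
      qed
      finally show "norm (F (of_real (real k))) \<le> \<bar>A\<bar> * D * exp (\<sigma>/2) * exp (- (\<sigma> / 2) * real k)"
        by (simp add: t_def)
    qed
    have "((\<lambda>x::real. \<bar>A\<bar> * D * exp (\<sigma>/2) * exp (- (\<sigma> / 2) * x)) \<longlongrightarrow> 0) at_top"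
      using s by real_asymp
    then show "((\<lambda>k::nat. \<bar>A\<bar> * D * exp (\<sigma>/2) * exp (- (\<sigma> / 2) * real k)) \<longlongrightarrow> 0) sequentially"
      by (rule filterlim_compose) (rule filterlim_real_sequentially)
  qed
  define f where "f = (\<lambda>k::nat. \<lambda>t. if t \<in> {0..real k} then e t else 0)"
  show ?thesis unfolding e_def[symmetric]
  proof (rule has_integral_dominated_convergence[where f = f and h = "\<lambda>t. D * exp (- (\<sigma> / 2) * t)"
        and y = "\<lambda>k. F (of_real (real k)) - F (of_real 0)"])
    fix k :: nat
    show "(f k has_integral F (of_real (real k)) - F (of_real 0)) {0..}"
      unfolding f_def by (subst has_integral_restrict) (use FTC[of "real k"] in auto)
  next
    show "(\<lambda>t. D * exp (- (\<sigma> / 2) * t)) integrable_on {0..}"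
      using has_integral_exp_minus_to_infinity[of "\<sigma>/2" 0] s
      by (intro integrable_on_mult_right) (auto simp: integrable_on_def)
  next
    fix k show "\<forall>x\<in>{0..}. norm (f k x) \<le> D * exp (- (\<sigma> / 2) * x)"
      using norm_e Dpos by (auto simp: f_def)
  next
    show "\<forall>x\<in>{0..}. (\<lambda>k. f k x) \<longlonglongrightarrow> e x"
    proof
      fix x :: real assume x: "x \<in> {0..}"
      have "eventually (\<lambda>k. real k \<ge> x) at_top"
        by (meson eventually_sequentiallyI nat_ceiling_le_eq)
      with x have "eventually (\<lambda>k. f k x = e x) at_top"
        by (simp add: eventually_mono f_def)
      thus "(\<lambda>k. f k x) \<longlonglongrightarrow> e x" by (simp add: tendsto_eventually)
    qed
  next
    show "(\<lambda>k. F (of_real (real k)) - F (of_real 0)) \<longlonglongrightarrow> fact n / b ^ Suc n"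
      using tendsto_diff[OF Flim tendsto_const[of "F (of_real 0)"]] F0 by simp
  qed
qed


context
  fixes l1 l2 m1 m2 :: real and c :: nat
  assumes l1: "l1 > 0" and l2: "l2 > 0" and m1: "m1 > 0" and m2: "m2 > 0"
begin

lemma unif_pos: "unif l1 l2 m1 m2 c > 0"
  using l1 l2 m1 m2 by (simp add: unif_def add_pos_nonneg)

lemma outrate_le: "outrate l1 l2 m1 m2 c x \<le> unif l1 l2 m1 m2 c"
proof -
  have "real (min (fst x) (c - snd x)) * m1 \<le> real c * m1" using m1 by (intro mult_right_mono) auto
  moreover have "real (min c (snd x)) * m2 \<le> real c * m2" using m2 by (intro mult_right_mono) auto
  ultimately show ?thesis by (simp add: outrate_def unif_def algebra_simps)
qed

lemma rate_nonneg: "rate l1 l2 m1 m2 c x y \<ge> 0"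
  using l1 l2 m1 m2 by (auto simp: rate_def Let_def)

lemma jump_nonneg: "jump l1 l2 m1 m2 c x y \<ge> 0"
  using outrate_le[of x] unif_pos rate_nonneg[of x y] by (auto simp: jump_def field_simps)

lemma rate_far: "fst x > fst y + 1 \<or> snd x > snd y + 1 \<Longrightarrow> rate l1 l2 m1 m2 c x y = 0"
  by (cases x; cases y) (auto simp: rate_def Let_def)

lemma jump_far: "fst x > fst y + 1 \<or> snd x > snd y + 1 \<Longrightarrow> jump l1 l2 m1 m2 c x y = 0"
  using rate_far by (auto simp: jump_def)

lemma jump_nz: "jump l1 l2 m1 m2 c x y \<noteq> 0 \<Longrightarrow> fst x \<le> fst y + 1 \<and> snd x \<le> snd y + 1"
proof -
  assume h: "jump l1 l2 m1 m2 c x y \<noteq> 0"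
  show ?thesis
  proof (rule ccontr)
    assume "\<not> (fst x \<le> fst y + 1 \<and> snd x \<le> snd y + 1)"
    then have "fst x > fst y + 1 \<or> snd x > snd y + 1" by linarith
    then show False using jump_far h by blast
  qed
qed

definition nbs :: "nat \<times> nat \<Rightarrow> (nat \<times> nat) set" where
  "nbs x = {x, (fst x + 1, snd x), (fst x, snd x + 1)} \<union> (if fst x \<ge> 1 then {(fst x - 1, snd x)} else {})
       \<union> (if snd x \<ge> 1 then {(fst x, snd x - 1)} else {})"

lemma rate_nbs: "y \<notin> nbs x \<Longrightarrow> rate l1 l2 m1 m2 c x y = 0"
proof -
  obtain a b where x: "x = (a, b)" by (cases x)
  assume "y \<notin> nbs x"
  then have "y \<noteq> (a + 1, b)" "y \<noteq> (a, b + 1)" "\<not> (a \<ge> 1 \<and> y = (a - 1, b))" "\<not> (b \<ge> 1 \<and> y = (a, b - 1))"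
    by (auto simp: x nbs_def)
  then show ?thesis unfolding rate_def x Let_def fst_conv snd_conv by (simp only: if_False)
qed

lemma jump_nbs: "y \<notin> nbs x \<Longrightarrow> jump l1 l2 m1 m2 c x y = 0"
  using rate_nbs by (auto simp: jump_def nbs_def)

lemma rate_r1: "rate l1 l2 m1 m2 c (a, b) (a + 1, b) = l1"
  by (simp add: rate_def)
lemma rate_r2: "rate l1 l2 m1 m2 c (a, b) (a, b + 1) = l2"
  by (simp add: rate_def)
lemma rate_r3: "rate l1 l2 m1 m2 c (Suc a, b) (a, b) = real (min (Suc a) (c - b)) * m1"
  by (simp add: rate_def)
lemma rate_r4: "rate l1 l2 m1 m2 c (a, Suc b) (a, b) = real (min c (Suc b)) * m2"
  by (simp add: rate_def)

lemma jump_rowsum: "(\<Sum>y\<in>nbs x. jump l1 l2 m1 m2 c x y) = 1"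
proof -
  obtain a b where x: "x = (a, b)" by (cases x)
  define U where "U = unif l1 l2 m1 m2 c"
  have U: "U \<noteq> 0" using unif_pos by (simp add: U_def)
  show ?thesis
  proof (cases a)
    case 0
    show ?thesis
    proof (cases b)
      case 0
      have "(\<Sum>y\<in>nbs x. jump l1 l2 m1 m2 c x y) = (1 - outrate l1 l2 m1 m2 c (0,0) / U) + l1 / U + l2 / U"
        using \<open>a = 0\<close> 0 rate_r1[of 0 0] rate_r2[of 0 0] by (simp add: x nbs_def jump_def U_def)
      also have "\<dots> = 1" using U by (simp add: outrate_def field_simps)
      finally show ?thesis .
    next
      case (Suc b')
      have "(\<Sum>y\<in>nbs x. jump l1 l2 m1 m2 c x y) = (1 - outrate l1 l2 m1 m2 c (0,Suc b') / U) + l1 / U + l2 / U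
         + real (min c (Suc b')) * m2 / U"
        using \<open>a = 0\<close> Suc rate_r1[of 0 "Suc b'"] rate_r2[of 0 "Suc b'"] rate_r4[of 0 b']
        by (simp add: x nbs_def jump_def U_def)
      also have "\<dots> = 1" using U by (simp add: outrate_def field_simps)
      finally show ?thesis .
    qed
  next
    case (Suc a')
    show ?thesis
    proof (cases b)
      case 0
      have "(\<Sum>y\<in>nbs x. jump l1 l2 m1 m2 c x y) = (1 - outrate l1 l2 m1 m2 c (Suc a',0) / U) + l1 / U + l2 / U
         + real (min (Suc a') (c - 0)) * m1 / U"
        using Suc 0 rate_r1[of "Suc a'" 0] rate_r2[of "Suc a'" 0] rate_r3[of a' 0]
        by (simp add: x nbs_def jump_def U_def)
      also have "\<dots> = 1" using U by (simp add: outrate_def field_simps)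
      finally show ?thesis .
    next
      case (Suc b')
      have "(\<Sum>y\<in>nbs x. jump l1 l2 m1 m2 c x y) = (1 - outrate l1 l2 m1 m2 c (Suc a',Suc b') / U) + l1 / U + l2 / U
         + real (min (Suc a') (c - Suc b')) * m1 / U + real (min c (Suc b')) * m2 / U"
        using \<open>a = Suc a'\<close> Suc rate_r1[of "Suc a'" "Suc b'"] rate_r2[of "Suc a'" "Suc b'"] rate_r3[of a' "Suc b'"]
          rate_r4[of "Suc a'" b']
        by (simp add: x nbs_def jump_def U_def)
      also have "\<dots> = 1" using U by (simp add: outrate_def field_simps)
      finally show ?thesis .
    qed
  qed
qed

lemma finite_nbs: "finite (nbs x)" by (simp add: nbs_def)

lemma jump_sum_le: "finite A \<Longrightarrow> (\<Sum>y\<in>A. jump l1 l2 m1 m2 c x y) \<le> 1"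
proof -
  assume A: "finite A"
  have "(\<Sum>y\<in>A. jump l1 l2 m1 m2 c x y) = (\<Sum>y\<in>A \<inter> nbs x. jump l1 l2 m1 m2 c x y)"
    using A by (intro sum.mono_neutral_right) (auto simp: jump_nbs)
  also have "\<dots> \<le> (\<Sum>y\<in>nbs x. jump l1 l2 m1 m2 c x y)"
    using finite_nbs by (intro sum_mono2) (auto simp: jump_nonneg)
  finally show ?thesis using jump_rowsum by simp
qed

lemma Pn_nonneg: "Pn l1 l2 m1 m2 c n y \<ge> 0"
  by (induction n arbitrary: y) (auto intro!: sum_nonneg mult_nonneg_nonneg jump_nonneg)

lemma Pn_box: "(\<Sum>y\<in>{0..M}\<times>{0..M}. Pn l1 l2 m1 m2 c n y) \<le> 1"
proof (induction n arbitrary: M)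
  case 0
  show ?case by (simp add: sum.If_cases[of _ "\<lambda>y. y = (0,0)"] )
next
  case (Suc n)
  let ?B = "{0..M}\<times>{0..M}" and ?B1 = "{0..Suc M}\<times>{0..Suc M}"
  have eq: "Pn l1 l2 m1 m2 c (Suc n) y = (\<Sum>x\<in>?B1. Pn l1 l2 m1 m2 c n x * jump l1 l2 m1 m2 c x y)"
    if "y \<in> ?B" for y
    using that by (simp, intro sum.mono_neutral_left) (auto dest: jump_nz)
  have "(\<Sum>y\<in>?B. Pn l1 l2 m1 m2 c (Suc n) y) = (\<Sum>y\<in>?B. \<Sum>x\<in>?B1. Pn l1 l2 m1 m2 c n x * jump l1 l2 m1 m2 c x y)"
    using eq by (intro sum.cong) auto
  also have "\<dots> = (\<Sum>x\<in>?B1. Pn l1 l2 m1 m2 c n x * (\<Sum>y\<in>?B. jump l1 l2 m1 m2 c x y))"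
    by (subst sum.swap) (simp add: sum_distrib_left)
  also have "\<dots> \<le> (\<Sum>x\<in>?B1. Pn l1 l2 m1 m2 c n x * 1)"
    by (intro sum_mono mult_left_mono jump_sum_le Pn_nonneg) auto
  also have "\<dots> \<le> 1" using Suc.IH[of "Suc M"] by simp
  finally show ?case .
qed

lemma Pn_le1: "Pn l1 l2 m1 m2 c n y \<le> 1"
proof -
  let ?M = "max (fst y) (snd y)"
  have "Pn l1 l2 m1 m2 c n y \<le> (\<Sum>y\<in>{0..?M}\<times>{0..?M}. Pn l1 l2 m1 m2 c n y)"
    by (rule member_le_sum) (auto simp: Pn_nonneg mem_Times_iff)
  also have "\<dots> \<le> 1" by (rule Pn_box)
  finally show ?thesis .
qed

end


context
  fixes l1 l2 m1 m2 :: real and c :: nat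
  assumes l1: "l1 > 0" and l2: "l2 > 0" and m1: "m1 > 0" and m2: "m2 > 0"
begin

lemma exp_split: "exp (- (\<alpha> + complex_of_real U) * of_real t) = exp (- \<alpha> * of_real t) * of_real (exp (- U * t))"
proof -
  have "exp (- (\<alpha> + complex_of_real U) * of_real t) = exp (- \<alpha> * of_real t + of_real (- U * t))"
    by (simp add: algebra_simps)
  also have "\<dots> = exp (- \<alpha> * of_real t) * exp (of_real (- U * t))" by (rule exp_add)
  finally show ?thesis by (simp only: exp_of_real)
qed

lemma ptrans_sums:
  "(\<lambda>n. exp (- unif l1 l2 m1 m2 c * t) * (unif l1 l2 m1 m2 c * t) ^ n / fact n * Pn l1 l2 m1 m2 c n x)
     sums ptrans l1 l2 m1 m2 c x t"
proof -
  let ?U = "unif l1 l2 m1 m2 c"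
  have s: "summable (\<lambda>n. \<bar>?U * t\<bar> ^ n / fact n)"
    using exp_converges[of "\<bar>?U * t\<bar>"] by (simp add: sums_iff divide_inverse_commute scaleR_conv_of_real)
  have g: "summable (\<lambda>n. exp (- ?U * t) * (\<bar>?U * t\<bar> ^ n / fact n))" by (rule summable_mult[OF s])
  have "summable (\<lambda>n. exp (- ?U * t) * (?U * t) ^ n / fact n * Pn l1 l2 m1 m2 c n x)"
  proof (rule summable_comparison_test'[OF g, where N = 0])
    fix n :: nat
    have P: "0 \<le> Pn l1 l2 m1 m2 c n x" "Pn l1 l2 m1 m2 c n x \<le> 1"
      using Pn_nonneg[OF l1 l2 m1 m2] Pn_le1[OF l1 l2 m1 m2] by auto
    have "norm (exp (- ?U * t) * (?U * t) ^ n / fact n * Pn l1 l2 m1 m2 c n x)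
        = exp (- ?U * t) * (\<bar>?U * t\<bar> ^ n / fact n) * Pn l1 l2 m1 m2 c n x"
      using P by (simp add: abs_mult power_abs)
    also have "\<dots> \<le> exp (- ?U * t) * (\<bar>?U * t\<bar> ^ n / fact n)"
      using P by (intro mult_left_le) auto
    finally show "norm (exp (- ?U * t) * (?U * t) ^ n / fact n * Pn l1 l2 m1 m2 c n x) \<le> exp (- ?U * t) * (\<bar>?U * t\<bar> ^ n / fact n)" .
  qed
  then show ?thesis unfolding ptrans_def by (simp add: summable_sums)
qed

lemma piLT_sums:
  assumes a: "Re \<alpha> > 0"
  shows "(\<lambda>n. of_real (Pn l1 l2 m1 m2 c n x * unif l1 l2 m1 m2 c ^ n) / (\<alpha> + of_real (unif l1 l2 m1 m2 c)) ^ Suc n)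
           sums piLT l1 l2 m1 m2 c x \<alpha>"
proof -
  define U where "U = unif l1 l2 m1 m2 c"
  have U: "U > 0" using unif_pos[OF l1 l2 m1 m2] by (simp add: U_def)
  define \<beta> where "\<beta> = \<alpha> + of_real U"
  have Reb: "Re \<beta> > U" using a by (simp add: \<beta>_def)
  have nb: "norm \<beta> > U" using Reb complex_Re_le_cmod[of \<beta>] by linarith
  have q1: "U / norm \<beta> < 1" using U nb by (simp add: divide_less_eq)
  define P where "P = (\<lambda>n x. Pn l1 l2 m1 m2 c n x)"
  have P01: "0 \<le> P n x" "P n x \<le> 1" for n x
    using Pn_nonneg[OF l1 l2 m1 m2] Pn_le1[OF l1 l2 m1 m2] by (auto simp: P_def)
  define tm where "tm = (\<lambda>n. of_real (P n x * U ^ n) / \<beta> ^ Suc n)"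
  have tm_bound: "norm (tm n) \<le> (1 / norm \<beta>) * (U / norm \<beta>) ^ n" for n
  proof -
    have "norm (tm n) = P n x * U ^ n / norm \<beta> ^ Suc n"
      using P01[of n x] U by (simp add: tm_def norm_divide norm_power norm_mult abs_mult)
    also have "\<dots> \<le> U ^ n / norm \<beta> ^ Suc n"
      using P01[of n x] U by (intro divide_right_mono mult_left_le_one_le) auto
    also have "\<dots> = (1 / norm \<beta>) * (U / norm \<beta>) ^ n" by (simp add: power_divide)
    finally show ?thesis .
  qed
  have geo: "summable (\<lambda>n. (1 / norm \<beta>) * (U / norm \<beta>) ^ n)"
    using U nb q1 by (intro summable_mult summable_geometric) auto
  have sumtm: "summable tm"
    by (rule summable_comparison_test'[OF geo, where N = 0]) (use tm_bound in auto)
  define F where "F = (\<lambda>N t. \<Sum>n<N. of_real (P n x * U ^ n / fact n) * (exp (- \<beta> * of_real t) * of_real t ^ n))"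
  define g where "g = (\<lambda>t. exp (- \<alpha> * complex_of_real t) * complex_of_real (ptrans l1 l2 m1 m2 c x t))"
  have Feq: "F N t = exp (- \<alpha> * of_real t) * of_real (\<Sum>n<N. exp (- U * t) * (U * t) ^ n / fact n * P n x)" for N t
  proof -
    have "F N t = (\<Sum>n<N. exp (- \<alpha> * of_real t) * of_real (exp (- U * t) * (U * t) ^ n / fact n * P n x))"
      unfolding F_def \<beta>_def exp_split
      by (intro sum.cong refl) (simp add: power_mult_distrib mult_ac)
    also have "\<dots> = exp (- \<alpha> * of_real t) * of_real (\<Sum>n<N. exp (- U * t) * (U * t) ^ n / fact n * P n x)"
      by (simp add: sum_distrib_left)
    finally show ?thesis .
  qed
  have "(g has_integral suminf tm) {0..}"
  proof (rule has_integral_dominated_convergence[where f = F and h = "\<lambda>t. exp (- (Re \<alpha>) * t)"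
        and y = "\<lambda>N. \<Sum>n<N. tm n"])
    fix N
    have "((\<lambda>t. of_real (P n x * U ^ n / fact n) * (exp (- \<beta> * of_real t) * of_real t ^ n)) has_integral
            of_real (P n x * U ^ n / fact n) * (fact n / \<beta> ^ Suc n)) {0..}" for n
      using Reb U by (intro has_integral_mult_right termint) auto
    then have "(F N has_integral (\<Sum>n<N. of_real (P n x * U ^ n / fact n) * (fact n / \<beta> ^ Suc n))) {0..}"
      unfolding F_def by (intro has_integral_sum) auto
    moreover have "(\<Sum>n<N. of_real (P n x * U ^ n / fact n) * (fact n / \<beta> ^ Suc n)) = (\<Sum>n<N. tm n)"
    proof (intro sum.cong refl)
      fix n
      have f: "(fact n :: complex) = of_real (fact n)" by simp
      have "complex_of_real (P n x * U ^ n / fact n) * (fact n / \<beta> ^ Suc n) = complex_of_real (P n x * U ^ n / fact n * fact n) / \<beta> ^ Suc n"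
        by (subst f) (simp only: of_real_mult times_divide_eq_right)
      also have "P n x * U ^ n / fact n * fact n = P n x * U ^ n" by simp
      finally show "complex_of_real (P n x * U ^ n / fact n) * (fact n / \<beta> ^ Suc n) = tm n" by (simp add: tm_def)
    qed
    ultimately show "(F N has_integral (\<Sum>n<N. tm n)) {0..}" by simp
  next
    show "(\<lambda>t. exp (- (Re \<alpha>) * t)) integrable_on {0..}"
      using has_integral_exp_minus_to_infinity[of "Re \<alpha>" 0] a by (auto simp: integrable_on_def)
  next
    fix N show "\<forall>t\<in>{0..}. norm (F N t) \<le> exp (- (Re \<alpha>) * t)"
    proof
      fix t :: real assume t: "t \<in> {0..}"
      then have t0: "t \<ge> 0" by simp
      have nn: "0 \<le> (\<Sum>n<N. exp (- U * t) * (U * t) ^ n / fact n * P n x)"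
        using P01 U t0 by (intro sum_nonneg mult_nonneg_nonneg) auto
      have "(\<Sum>n<N. exp (- U * t) * (U * t) ^ n / fact n * P n x) \<le> (\<Sum>n<N. exp (- U * t) * ((U * t) ^ n / fact n))"
      proof (intro sum_mono)
        fix n
        have "0 \<le> exp (- U * t) * (U * t) ^ n / fact n" using U t0 by simp
        then show "exp (- U * t) * (U * t) ^ n / fact n * P n x \<le> exp (- U * t) * ((U * t) ^ n / fact n)"
          using mult_left_le[of "P n x" "exp (- U * t) * (U * t) ^ n / fact n"] P01[of n x] by simp
      qed
      also have "\<dots> = exp (- U * t) * (\<Sum>n<N. (U * t) ^ n / fact n)" by (simp add: sum_distrib_left)
      also have "\<dots> \<le> exp (- U * t) * exp (U * t)"
        using partial_exp_le[of "U * t" N] U t0 by (intro mult_left_mono) auto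
      also have "\<dots> = 1" by (simp add: exp_minus[symmetric] exp_add[symmetric])
      finally have le1: "(\<Sum>n<N. exp (- U * t) * (U * t) ^ n / fact n * P n x) \<le> 1" .
      have "norm (F N t) = exp (- (Re \<alpha>) * t) * \<bar>\<Sum>n<N. exp (- U * t) * (U * t) ^ n / fact n * P n x\<bar>"
        unfolding Feq norm_mult norm_of_real norm_exp_eq_Re by simp
      also have "\<dots> \<le> exp (- (Re \<alpha>) * t) * 1"
        using le1 nn by (intro mult_left_mono) auto
      finally show "norm (F N t) \<le> exp (- (Re \<alpha>) * t)" by simp
    qed
  next
    show "\<forall>t\<in>{0..}. (\<lambda>N. F N t) \<longlonglongrightarrow> g t"
    proof
      fix t :: real assume "t \<in> {0..}"
      have "(\<lambda>N. \<Sum>n<N. exp (- U * t) * (U * t) ^ n / fact n * P n x) \<longlonglongrightarrow> ptrans l1 l2 m1 m2 c x t"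
        using ptrans_sums[of t x] unfolding U_def P_def sums_def .
      then have "(\<lambda>N. exp (- \<alpha> * of_real t) * of_real (\<Sum>n<N. exp (- U * t) * (U * t) ^ n / fact n * P n x))
          \<longlonglongrightarrow> exp (- \<alpha> * of_real t) * of_real (ptrans l1 l2 m1 m2 c x t)"
        by (intro tendsto_intros)
      then show "(\<lambda>N. F N t) \<longlonglongrightarrow> g t" unfolding Feq g_def .
    qed
  next
    show "(\<lambda>N. \<Sum>n<N. tm n) \<longlonglongrightarrow> suminf tm" using summable_LIMSEQ[OF sumtm] .
  qed
  then have "piLT l1 l2 m1 m2 c x \<alpha> = suminf tm"
    unfolding piLT_def g_def[symmetric] by (rule integral_unique)
  then show ?thesis using sumtm unfolding tm_def P_def \<beta>_def U_def
    by (simp add: summable_sums)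
qed

lemma piLT_bound:
  assumes a: "Re \<alpha> > 0"
  shows "norm (piLT l1 l2 m1 m2 c x \<alpha>) \<le> 1 / (norm (\<alpha> + of_real (unif l1 l2 m1 m2 c)) - unif l1 l2 m1 m2 c)"
proof -
  define U where "U = unif l1 l2 m1 m2 c"
  have U: "U > 0" using unif_pos[OF l1 l2 m1 m2] by (simp add: U_def)
  define \<beta> where "\<beta> = \<alpha> + of_real U"
  have Reb: "Re \<beta> > U" using a by (simp add: \<beta>_def)
  have nb: "norm \<beta> > U" using Reb complex_Re_le_cmod[of \<beta>] by linarith
  have q1: "U / norm \<beta> < 1" using U nb by (simp add: divide_less_eq)
  define tm where "tm = (\<lambda>n. of_real (Pn l1 l2 m1 m2 c n x * U ^ n) / \<beta> ^ Suc n)"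
  have S: "tm sums piLT l1 l2 m1 m2 c x \<alpha>" using piLT_sums[OF a, of x] by (simp add: tm_def \<beta>_def U_def)
  have P01: "0 \<le> Pn l1 l2 m1 m2 c n x" "Pn l1 l2 m1 m2 c n x \<le> 1" for n
    using Pn_nonneg[OF l1 l2 m1 m2] Pn_le1[OF l1 l2 m1 m2] by auto
  have tm_bound: "norm (tm n) \<le> (1 / norm \<beta>) * (U / norm \<beta>) ^ n" for n
  proof -
    have "norm (tm n) = Pn l1 l2 m1 m2 c n x * U ^ n / norm \<beta> ^ Suc n"
      using P01[of n] U by (simp add: tm_def norm_divide norm_power norm_mult abs_mult)
    also have "\<dots> \<le> U ^ n / norm \<beta> ^ Suc n"
      using P01[of n] U by (intro divide_right_mono mult_left_le_one_le) auto
    also have "\<dots> = (1 / norm \<beta>) * (U / norm \<beta>) ^ n" by (simp add: power_divide)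
    finally show ?thesis .
  qed
  have gs: "(\<lambda>n. (1 / norm \<beta>) * (U / norm \<beta>) ^ n) sums ((1 / norm \<beta>) * (1 / (1 - U / norm \<beta>)))"
    using U nb q1 by (intro sums_mult geometric_sums) auto
  have sn: "summable (\<lambda>n. norm (tm n))"
    by (rule summable_comparison_test'[OF sums_summable[OF gs], where N = 0]) (use tm_bound in auto)
  have "norm (piLT l1 l2 m1 m2 c x \<alpha>) = norm (suminf tm)" using S by (simp add: sums_iff)
  also have "\<dots> \<le> (\<Sum>n. norm (tm n))" by (rule summable_norm[OF sn])
  also have "\<dots> \<le> (\<Sum>n. (1 / norm \<beta>) * (U / norm \<beta>) ^ n)"
    by (rule suminf_le[OF tm_bound sn sums_summable[OF gs]])
  also have "\<dots> = (1 / norm \<beta>) * (1 / (1 - U / norm \<beta>))" using gs by (simp add: sums_iff)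
  also have "\<dots> = 1 / (norm \<beta> - U)"
  proof -
    have "norm \<beta> \<noteq> 0" "norm \<beta> - U \<noteq> 0" using nb U by auto
    then show ?thesis by (simp add: field_simps)
  qed
  finally show ?thesis by (simp add: \<beta>_def U_def)
qed

lemma resolvent:
  assumes a: "Re \<alpha> > 0" and y: "y \<noteq> (0, 0)"
  shows "(\<alpha> + of_real (unif l1 l2 m1 m2 c)) * piLT l1 l2 m1 m2 c y \<alpha> =
     of_real (unif l1 l2 m1 m2 c) * (\<Sum>x\<in>{0..fst y + 1} \<times> {0..snd y + 1}.
        of_real (jump l1 l2 m1 m2 c x y) * piLT l1 l2 m1 m2 c x \<alpha>)"
proof -
  define U where "U = unif l1 l2 m1 m2 c"
  have U: "U > 0" using unif_pos[OF l1 l2 m1 m2] by (simp add: U_def)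
  define \<beta> where "\<beta> = \<alpha> + of_real U"
  have b0: "\<beta> \<noteq> 0" using a U by (auto simp: \<beta>_def complex_eq_iff)
  define P where "P = (\<lambda>n x. Pn l1 l2 m1 m2 c n x)"
  define B where "B = {0..fst y + 1} \<times> {0..snd y + 1}"
  define tm where "tm = (\<lambda>x n. of_real (P n x * U ^ n) / \<beta> ^ Suc n)"
  have S: "tm x sums piLT l1 l2 m1 m2 c x \<alpha>" for x
    using piLT_sums[OF a, of x] by (simp add: tm_def \<beta>_def U_def P_def)
  have S1: "(\<lambda>n. \<beta> * tm y n) sums (\<beta> * piLT l1 l2 m1 m2 c y \<alpha>)" by (rule sums_mult[OF S])
  have z: "\<beta> * tm y 0 = 0" using y by (simp add: tm_def P_def)
  have S2: "(\<lambda>n. \<beta> * tm y (Suc n)) sums (\<beta> * piLT l1 l2 m1 m2 c y \<alpha>)"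
    using S1 by (subst sums_Suc_iff) (simp only: z add_0_right)
  have eq: "\<beta> * tm y (Suc n) = (\<Sum>x\<in>B. of_real (U * jump l1 l2 m1 m2 c x y) * tm x n)" for n
  proof -
    have "\<beta> * tm y (Suc n) = of_real (P (Suc n) y * U ^ Suc n) / \<beta> ^ Suc n"
      using b0 by (simp add: tm_def)
    also have "\<dots> = (\<Sum>x\<in>B. of_real (P n x * jump l1 l2 m1 m2 c x y) * of_real (U ^ Suc n) / \<beta> ^ Suc n)"
      by (simp add: P_def B_def sum_divide_distrib sum_distrib_right)
    also have "\<dots> = (\<Sum>x\<in>B. of_real (U * jump l1 l2 m1 m2 c x y) * tm x n)"
      by (intro sum.cong refl) (simp add: tm_def)
    finally show ?thesis .
  qed
  have S3: "(\<lambda>n. \<Sum>x\<in>B. of_real (U * jump l1 l2 m1 m2 c x y) * tm x n) sums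
      (\<Sum>x\<in>B. of_real (U * jump l1 l2 m1 m2 c x y) * piLT l1 l2 m1 m2 c x \<alpha>)"
    by (intro sums_sum sums_mult S)
  have "\<beta> * piLT l1 l2 m1 m2 c y \<alpha> = (\<Sum>x\<in>B. of_real (U * jump l1 l2 m1 m2 c x y) * piLT l1 l2 m1 m2 c x \<alpha>)"
    using S2 S3 unfolding eq by (rule sums_unique2)
  also have "\<dots> = of_real U * (\<Sum>x\<in>B. of_real (jump l1 l2 m1 m2 c x y) * piLT l1 l2 m1 m2 c x \<alpha>)"
    by (simp add: sum_distrib_left mult.assoc)
  finally show ?thesis by (simp add: \<beta>_def U_def B_def)
qed

end


lemma root_sep:
  fixes K w :: complex and p q :: real
  assumes p: "p > 0" and q: "q > 0" and K: "Re K > p + q" and w: "w ^ 2 = K ^ 2 - of_real (4 * p * q)"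
    and u: "Re w \<ge> 0"
  shows "norm (K - w) < norm (K + w)"
proof -
  define x where "x = Re K" define y where "y = Im K" define u where "u = Re w" define v where "v = Im w"
  have x: "x > p + q" using K by (simp add: x_def)
  have e1: "u^2 - v^2 = x^2 - y^2 - 4*p*q" and e2: "u * v = x * y"
  proof -
    have "Re (w^2) = Re (K^2 - of_real (4*p*q))" "Im (w^2) = Im (K^2 - of_real (4*p*q))" using w by simp_all
    then show "u^2 - v^2 = x^2 - y^2 - 4*p*q" "u * v = x * y"
      by (simp_all add: power2_eq_square x_def y_def u_def v_def mult.commute)
  qed
  have u0: "u > 0"
  proof (rule ccontr)
    assume "\<not> u > 0"
    then have "u = 0" using u by (simp add: u_def)
    then have "x * y = 0" using e2 by simp
    moreover have "x \<noteq> 0" using x p q by linarith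
    ultimately have "y = 0" by simp
    then have "x^2 = 4*p*q - v^2" using e1 \<open>u = 0\<close> by simp
    then have "x^2 \<le> 4*p*q" using zero_le_power2[of v] by linarith
    moreover have "(p + q)^2 < x^2" using x p q by (intro power_strict_mono) auto
    moreover have "4*p*q \<le> (p+q)^2"
    proof -
      have "(p+q)^2 - 4*p*q = (p-q)^2" by (simp add: power2_eq_square algebra_simps)
      then show ?thesis using zero_le_power2[of "p-q"] by linarith
    qed
    ultimately show False by linarith
  qed
  have "u * (x * u + y * v) = x * (u^2 + y^2)" using e2 by (simp add: algebra_simps power2_eq_square)
  moreover have "x * (u^2 + y^2) > 0" using x p q u0 by (intro mult_pos_pos) (auto intro: add_pos_nonneg)
  ultimately have pos: "x * u + y * v > 0" using u0 by (metis zero_less_mult_pos)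
  have "(norm (K - w))^2 = (x - u)^2 + (y - v)^2" by (simp add: cmod_power2 x_def y_def u_def v_def)
  moreover have "(norm (K + w))^2 = (x + u)^2 + (y + v)^2" by (simp add: cmod_power2 x_def y_def u_def v_def)
  ultimately have "(norm (K - w))^2 < (norm (K + w))^2" using pos by (simp add: power2_eq_square algebra_simps)
  then show ?thesis by (meson norm_ge_zero power2_less_imp_less)
qed

context
  fixes l1 l2 m2 :: real and c :: nat and \<alpha> :: complex
  assumes l1: "l1 > 0" and l2: "l2 > 0" and m2: "m2 > 0" and c: "c \<ge> 1" and a: "Re \<alpha> > 0"
begin

definition "qq = real c * m2"
definition "KK = \<alpha> + of_real (l1 + l2 + qq)"
definition "ww = csqrt (KK ^ 2 - of_real (4 * l2 * qq))"
definition "rr' = (KK + ww) / of_real (2 * qq)"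

lemma qq_pos: "qq > 0" using c m2 by (simp add: qq_def)

lemma KK_Re: "Re KK > l2 + qq" using a l1 by (simp add: KK_def)

lemma phi2_eq: "phi2 l1 l2 m2 c \<alpha> = (KK - ww) / of_real (2 * l2)"
  unfolding phi2_def phiBP_def ww_def KK_def qq_def
  by (simp add: algebra_simps)

lemma r2_eq: "r2 l1 l2 m2 c \<alpha> = (KK - ww) / of_real (2 * qq)"
  using l2 qq_pos unfolding r2_def phi2_eq rho2_def qq_def[symmetric]
  by (simp add: field_simps)

lemma r_lt: "norm (r2 l1 l2 m2 c \<alpha>) < norm rr'"
proof -
  have "norm (KK - ww) < norm (KK + ww)"
  proof (rule root_sep[of l2 qq])
    show "0 \<le> Re ww" unfolding ww_def by (rule Re_csqrt)
  qed (use l2 qq_pos KK_Re in \<open>auto simp: ww_def\<close>)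
  then show ?thesis using qq_pos unfolding r2_eq rr'_def by (simp add: norm_divide divide_strict_right_mono)
qed

lemma r_sum: "r2 l1 l2 m2 c \<alpha> + rr' = KK / of_real qq"
  using qq_pos unfolding r2_eq rr'_def by (simp add: field_simps)

lemma r_prod: "r2 l1 l2 m2 c \<alpha> * rr' = of_real (l2 / qq)"
proof -
  have "(KK - ww) * (KK + ww) = KK^2 - ww^2" by (simp add: algebra_simps power2_eq_square)
  also have "\<dots> = of_real (4 * l2 * qq)" by (simp add: ww_def)
  finally have "(KK - ww) * (KK + ww) = of_real (4 * l2 * qq)" .
  then show ?thesis using qq_pos unfolding r2_eq rr'_def by (simp add: field_simps)
qed

lemma r_root: "KK * r2 l1 l2 m2 c \<alpha> = of_real l2 + of_real qq * (r2 l1 l2 m2 c \<alpha>)^2"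
proof -
  define r where "r = r2 l1 l2 m2 c \<alpha>"
  have "KK = of_real qq * (r + rr')" using r_sum qq_pos by (simp add: r_def field_simps)
  moreover have "of_real l2 = of_real qq * (r * rr')" using r_prod qq_pos by (simp add: r_def field_simps)
  ultimately show ?thesis by (simp add: r_def[symmetric] algebra_simps power2_eq_square)
qed

lemma r_small: "norm (r2 l1 l2 m2 c \<alpha>) < 1"
proof (rule ccontr)
  define r where "r = r2 l1 l2 m2 c \<alpha>"
  assume "\<not> norm (r2 l1 l2 m2 c \<alpha>) < 1"
  then have r1: "norm r \<ge> 1" by (simp add: r_def)
  have rr: "norm r < norm rr'" using r_lt by (simp add: r_def)
  have "(norm r - 1) * (norm rr' - 1) \<ge> 0" using r1 rr by simp
  then have "norm r * norm rr' + 1 \<ge> norm r + norm rr'" by (simp add: algebra_simps)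
  moreover have "norm r + norm rr' \<ge> norm (KK / of_real qq)"
    using r_sum norm_triangle_ineq[of r rr'] by (simp add: r_def)
  moreover have "norm (KK / of_real qq) > (l2 + qq) / qq"
  proof -
    have "norm KK \<ge> Re KK" by (rule complex_Re_le_cmod)
    then have "norm KK > l2 + qq" using KK_Re by linarith
    then show ?thesis using qq_pos by (simp add: norm_divide divide_strict_right_mono)
  qed
  moreover have "norm r * norm rr' = l2 / qq"
  proof -
    have "norm r * norm rr' = norm (r * rr')" by (simp add: norm_mult)
    also have "\<dots> = norm (complex_of_real (l2 / qq))" using r_prod by (simp add: r_def)
    also have "\<dots> = l2 / qq" using l2 qq_pos by (simp only: norm_of_real) simp
    finally show ?thesis .
  qed
  moreover have "(l2 + qq) / qq = l2 / qq + 1" using qq_pos by (simp add: field_simps)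
  ultimately show False by linarith
qed

lemma r_nz: "r2 l1 l2 m2 c \<alpha> \<noteq> 0"
  using r_prod l2 qq_pos by auto

lemma rr'_nz: "rr' \<noteq> 0"
  using r_prod l2 qq_pos by auto

lemma r_r_phi: "r2 l1 l2 m2 c \<alpha> * phi2 l1 l2 m2 c \<alpha> \<noteq> 1"
proof
  define r where "r = r2 l1 l2 m2 c \<alpha>"
  define \<phi> where "\<phi> = phi2 l1 l2 m2 c \<alpha>"
  assume "r2 l1 l2 m2 c \<alpha> * phi2 l1 l2 m2 c \<alpha> = 1"
  then have h: "r * \<phi> = 1" by (simp add: r_def \<phi>_def)
  have r\<phi>: "r = of_real (l2 / qq) * \<phi>" by (simp add: r_def \<phi>_def r2_def rho2_def qq_def)
  have "r * r = of_real (l2 / qq)" using h r\<phi> by (metis mult.assoc mult.commute mult_1)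
  then have "r * r = r * rr'" using r_prod by (simp add: r_def)
  then have "r = rr'" using r_nz by (simp add: r_def)
  then show False using r_lt by (simp add: r_def)
qed

lemma phi_nz: "phi2 l1 l2 m2 c \<alpha> \<noteq> 0"
  using r_nz by (simp add: r2_def)

lemma B_eq: "of_real qq * r2 l1 l2 m2 c \<alpha> = of_real l2 / r2 l1 l2 m2 c \<alpha> * R2 l1 l2 m2 c \<alpha>"
  using r_nz qq_pos unfolding R2_def by (simp add: r2_def rho2_def qq_def field_simps)

lemma R_ident: "R1 l1 l2 m2 c \<alpha> * (1 - R2 l1 l2 m2 c \<alpha>) *
    (of_real l2 / r2 l1 l2 m2 c \<alpha> - of_real qq * r2 l1 l2 m2 c \<alpha>) = of_real l1"
proof -
  define r where "r = r2 l1 l2 m2 c \<alpha>"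
  define \<phi> where "\<phi> = phi2 l1 l2 m2 c \<alpha>"
  have r\<phi>: "r = of_real (l2 / qq) * \<phi>" by (simp add: r_def \<phi>_def r2_def rho2_def qq_def)
  have n1: "1 - r * \<phi> \<noteq> 0" using r_r_phi by (simp add: r_def \<phi>_def)
  have rn: "r \<noteq> 0" using r_nz by (simp add: r_def)
  have R2e: "R2 l1 l2 m2 c \<alpha> = r * \<phi>" by (simp add: R2_def r_def \<phi>_def)
  have Om: "Omega2 l1 l2 m2 c \<alpha> = r / (of_real l2 * (1 - r * \<phi>))"
    by (simp add: Omega2_def r_def \<phi>_def r2_def power2_eq_square mult.assoc)
  have R1e: "R1 l1 l2 m2 c \<alpha> = of_real l1 * (r / (of_real l2 * (1 - r * \<phi>))) / (1 - r * \<phi>)"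
    by (simp add: R1_def Om r_def \<phi>_def)
  have qr2: "of_real qq * r * r = of_real l2 * r * \<phi>"
    using qq_pos by (simp add: r\<phi> field_simps)
  define s where "s = 1 - r * \<phi>"
  have sn: "s \<noteq> 0" using n1 by (simp add: s_def)
  have l2n: "(of_real l2 :: complex) \<noteq> 0" using l2 by simp
  have e1: "R1 l1 l2 m2 c \<alpha> * (1 - R2 l1 l2 m2 c \<alpha>) = of_real l1 * r / (of_real l2 * s)"
    unfolding R1e R2e s_def[symmetric] using sn by (simp add: field_simps)
  have e2: "of_real l2 / r - of_real qq * r = (of_real l2 - of_real qq * r * r) / r"
    using rn by (simp add: field_simps)
  have e3: "of_real l2 - of_real qq * r * r = of_real l2 * s"
    unfolding qr2 s_def by (simp add: algebra_simps)
  have "R1 l1 l2 m2 c \<alpha> * (1 - R2 l1 l2 m2 c \<alpha>) * (of_real l2 / r - of_real qq * r)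
      = of_real l1 * r / (of_real l2 * s) * ((of_real l2 * s) / r)"
    unfolding e1 e2 e3 ..
  also have "\<dots> = of_real l1" using sn rn l2n by (simp add: field_simps)
  finally show ?thesis by (simp add: r_def)
qed

end


definition hh :: "nat \<Rightarrow> nat \<Rightarrow> complex" where
  "hh k m = (if m = 0 then (if k = 0 then 1 else 0) else of_nat ((m - 1 + k) choose k))"

lemma hh_0 [simp]: "hh 0 m = 1" by (simp add: hh_def)

lemma hh_Suc_0 [simp]: "hh (Suc k) 0 = 0" by (simp add: hh_def)

lemma hh_H1: "hh (Suc k) (Suc m) = hh (Suc k) m + hh k (Suc m)"
proof (cases m)
  case 0
  then show ?thesis by (simp add: hh_def)
next
  case (Suc m')
  then show ?thesis by (simp add: hh_def)
qed

lemma hh_H2: "hh k (Suc m) = (\<Sum>j\<le>k. hh j m)"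
proof (induction k)
  case 0
  then show ?case by simp
next
  case (Suc k)
  then show ?case by (simp add: hh_H1)
qed

lemma sum_swap_tri:
  fixes a b :: "nat \<Rightarrow> 'a::comm_ring_1"
  shows "(\<Sum>k\<le>i. a k * (\<Sum>j<k. b j)) = (\<Sum>j<i. b j * (\<Sum>k=Suc j..i. a k))"
proof (induction i)
  case 0
  then show ?case by simp
next
  case (Suc i)
  have "(\<Sum>j<Suc i. b j * (\<Sum>k=Suc j..Suc i. a k)) = (\<Sum>j<Suc i. b j * (\<Sum>k=Suc j..i. a k) + b j * a (Suc i))"
    by (intro sum.cong refl) (simp add: algebra_simps)
  also have "\<dots> = (\<Sum>j<Suc i. b j * (\<Sum>k=Suc j..i. a k)) + a (Suc i) * (\<Sum>j<Suc i. b j)"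
    by (simp add: sum.distrib sum_distrib_right[symmetric] algebra_simps)
  also have "(\<Sum>j<Suc i. b j * (\<Sum>k=Suc j..i. a k)) = (\<Sum>j<i. b j * (\<Sum>k=Suc j..i. a k))"
    by simp
  finally show ?case using Suc by simp
qed

context
  fixes K l1 l2 q r R1 R2 :: complex
  assumes root: "K * r = l2 + q * r^2"
    and rnz: "r \<noteq> 0"
    and BA: "q * r = l2 / r * R2"
    and RI: "R1 * (1 - R2) * (l2 / r - q * r) = l1"
begin

definition gg :: "nat \<Rightarrow> nat \<Rightarrow> complex" where "gg k m = hh k m * r ^ m"

lemma L_gg:
  "K * gg k (Suc m) - l2 * gg k m - q * gg k (Suc (Suc m)) =
     (if k = 0 then 0 else l2 / r * gg (k - 1) (Suc m)) - q * r * (\<Sum>j<k. gg j (Suc m))"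
proof -
  have Kr: "K * r ^ Suc m = r ^ m * (l2 + q * r^2)"
  proof -
    have "K * r ^ Suc m = r ^ m * (K * r)" by (simp add: algebra_simps)
    then show ?thesis using root by simp
  qed
  have "K * gg k (Suc m) - l2 * gg k m - q * gg k (Suc (Suc m))
     = r ^ m * (l2 * (hh k (Suc m) - hh k m) - q * r^2 * (hh k (Suc (Suc m)) - hh k (Suc m)))"
  proof -
    have "K * gg k (Suc m) = hh k (Suc m) * (K * r ^ Suc m)" by (simp add: gg_def mult_ac)
    also have "\<dots> = hh k (Suc m) * (r ^ m * (l2 + q * r^2))" by (simp only: Kr)
    finally have e1: "K * gg k (Suc m) = hh k (Suc m) * (r ^ m * (l2 + q * r^2))" .
    show ?thesis unfolding e1 by (simp add: gg_def algebra_simps power2_eq_square)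
  qed
  also have "\<dots> = (if k = 0 then 0 else l2 / r * gg (k - 1) (Suc m)) - q * r * (\<Sum>j<k. gg j (Suc m))"
  proof (cases k)
    case 0
    then show ?thesis by simp
  next
    case (Suc k')
    have d1: "hh k (Suc m) - hh k m = hh k' (Suc m)" using hh_H1[of k' m] Suc by simp
    have d2: "hh k (Suc (Suc m)) - hh k (Suc m) = (\<Sum>j<k. hh j (Suc m))"
      using hh_H1[of k' "Suc m"] hh_H2[of k' "Suc m"] Suc by (simp add: lessThan_Suc_atMost)
    show ?thesis unfolding d1 d2 using Suc rnz
      by (simp add: gg_def sum_distrib_left sum_distrib_right power2_eq_square algebra_simps)
  qed
  finally show ?thesis .
qed

definition vv where "vv p c i k = vseq p R1 R2 c i k"
definition wv where "wv p c i k = vv p c i k * (1 - R2) ^ k"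
definition ff where "ff p c i m = (\<Sum>k\<le>i. wv p c i k * gg k m)"

lemma lemmaS:
  assumes "j \<le> Suc i"
  shows "(\<Sum>k=Suc j..Suc i. (1 - R2) ^ k * vv p c (Suc i) k) = R1 * (1 - R2) ^ Suc j * (\<Sum>k=j..i. vv p c i k)"
  using assms
proof (induction j rule: inc_induct)
  case base
  then show ?case by simp
next
  case (step n)
  have split1: "(\<Sum>k=Suc n..Suc i. (1 - R2) ^ k * vv p c (Suc i) k)
      = (1 - R2) ^ Suc n * vv p c (Suc i) (Suc n) + (\<Sum>k=Suc (Suc n)..Suc i. (1 - R2) ^ k * vv p c (Suc i) k)"
    using step(2) by (subst sum.atLeast_Suc_atMost) auto
  have vrec: "vv p c (Suc i) (Suc n) = R1 * (vv p c i n + R2 * (\<Sum>k=Suc n..i. vv p c i k))"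
    using step(2) by (simp add: vv_def)
  have split2: "(\<Sum>k=n..i. vv p c i k) = vv p c i n + (\<Sum>k=Suc n..i. vv p c i k)"
    using step(2) by (subst sum.atLeast_Suc_atMost) auto
  show ?case unfolding split1 step(3) vrec split2
    by (simp add: algebra_simps)
qed

lemma coeff_ident:
  assumes "j \<le> i"
  shows "l2 / r * wv p c (Suc i) (Suc j) - q * r * (\<Sum>k=Suc j..Suc i. wv p c (Suc i) k) = l1 * wv p c i j"
proof -
  define a where "a = 1 - R2"
  define S where "S = (\<lambda>j. \<Sum>k=j..i. vv p c i k)"
  define T where "T = (\<lambda>j. \<Sum>k=j..Suc i. wv p c (Suc i) k)"
  have T: "T (Suc j) = R1 * a ^ Suc j * S j" if "j \<le> Suc i" for j
    using lemmaS[OF that, of p c] by (simp add: T_def S_def wv_def a_def mult.commute)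
  have w: "wv p c (Suc i) (Suc j) = T (Suc j) - T (Suc (Suc j))"
    using assms unfolding T_def by (subst sum.atLeast_Suc_atMost) simp_all
  have Sj: "S j = vv p c i j + S (Suc j)"
    using assms by (simp add: S_def sum.atLeast_Suc_atMost)
  have Aa: "l2 / r * a = l2 / r - q * r"
  proof -
    have "l2 / r * a = l2 / r - l2 / r * R2" by (simp add: a_def right_diff_distrib)
    then show ?thesis using BA by simp
  qed
  have RIa: "R1 * a * (l2 / r - q * r) = l1" using RI by (simp add: a_def)
  have "l2 / r * wv p c (Suc i) (Suc j) - q * r * T (Suc j)
      = (l2 / r - q * r) * T (Suc j) - l2 / r * T (Suc (Suc j))"
    unfolding w by (simp add: algebra_simps)
  also have "\<dots> = R1 * a ^ Suc j * ((l2 / r - q * r) * S j - (l2 / r * a) * S (Suc j))"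
    using assms T[of j] T[of "Suc j"] by (simp add: algebra_simps)
  also have "\<dots> = R1 * a ^ Suc j * (l2 / r - q * r) * vv p c i j"
    unfolding Aa Sj by (simp add: algebra_simps)
  also have "\<dots> = (R1 * a * (l2 / r - q * r)) * (a ^ j * vv p c i j)"
    by (simp add: algebra_simps)
  also have "\<dots> = l1 * wv p c i j" unfolding RIa by (simp add: wv_def a_def mult.commute)
  finally show ?thesis by (simp add: T_def)
qed

lemma L_ff:
  "K * ff p c i (Suc m) - l2 * ff p c i m - q * ff p c i (Suc (Suc m)) =
     (if i = 0 then 0 else l1 * ff p c (i - 1) (Suc m))"
proof -
  have "K * ff p c i (Suc m) - l2 * ff p c i m - q * ff p c i (Suc (Suc m))
      = (\<Sum>k\<le>i. wv p c i k * (K * gg k (Suc m) - l2 * gg k m - q * gg k (Suc (Suc m))))"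
    by (simp add: ff_def sum_distrib_left sum_subtractf sum.distrib algebra_simps)
  also have "\<dots> = (\<Sum>k\<le>i. wv p c i k * (if k = 0 then 0 else l2 / r * gg (k - 1) (Suc m)))
       - q * r * (\<Sum>k\<le>i. wv p c i k * (\<Sum>j<k. gg j (Suc m)))"
    unfolding L_gg by (simp add: sum_subtractf sum_distrib_left algebra_simps)
  also have "\<dots> = (if i = 0 then 0 else l1 * ff p c (i - 1) (Suc m))"
  proof (cases i)
    case 0
    then show ?thesis by simp
  next
    case (Suc i')
    have s1: "(\<Sum>k\<le>i. wv p c i k * (if k = 0 then 0 else l2 / r * gg (k - 1) (Suc m)))
        = (\<Sum>j\<le>i'. l2 / r * wv p c i (Suc j) * gg j (Suc m))"
      unfolding Suc by (subst sum.atMost_Suc_shift) (simp add: mult_ac)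
    have s2: "(\<Sum>k\<le>i. wv p c i k * (\<Sum>j<k. gg j (Suc m)))
        = (\<Sum>j\<le>i'. gg j (Suc m) * (\<Sum>k=Suc j..i. wv p c i k))"
      unfolding sum_swap_tri Suc by (simp add: lessThan_Suc_atMost)
    have "(\<Sum>j\<le>i'. l2 / r * wv p c i (Suc j) * gg j (Suc m)) - q * r * (\<Sum>j\<le>i'. gg j (Suc m) * (\<Sum>k=Suc j..i. wv p c i k))
        = (\<Sum>j\<le>i'. (l2 / r * wv p c (Suc i') (Suc j) - q * r * (\<Sum>k=Suc j..Suc i'. wv p c (Suc i') k)) * gg j (Suc m))"
      unfolding Suc by (simp add: sum_distrib_left sum_subtractf algebra_simps)
    also have "\<dots> = (\<Sum>j\<le>i'. l1 * wv p c i' j * gg j (Suc m))"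
    proof (intro sum.cong refl)
      fix j assume "j \<in> {..i'}"
      then have j: "j \<le> i'" by simp
      show "(l2 / r * wv p c (Suc i') (Suc j) - q * r * (\<Sum>k=Suc j..Suc i'. wv p c (Suc i') k)) * gg j (Suc m)
          = l1 * wv p c i' j * gg j (Suc m)"
        by (subst coeff_ident[OF j]) (rule refl)
    qed
    also have "\<dots> = l1 * ff p c i' (Suc m)" by (simp add: ff_def sum_distrib_left mult.assoc)
    finally show ?thesis unfolding s1 s2 using Suc by simp
  qed
  finally show ?thesis .
qed

lemma ff_0: "ff p c i 0 = vseq p R1 R2 c i 0"
proof -
  have "ff p c i 0 = (\<Sum>k\<le>i. (if k = 0 then vv p c i 0 else 0))"
    unfolding ff_def by (intro sum.cong refl) (auto simp: wv_def gg_def hh_def)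
  then show ?thesis by (simp add: vv_def)
qed

lemma ff_Suc: "ff p c i (Suc m) = (\<Sum>k=0..i. vseq p R1 R2 c i k * (1 - R2) ^ k * of_nat ((Suc m - 1 + k) choose k) * r ^ Suc m)"
  unfolding ff_def atMost_atLeast0 by (intro sum.cong refl) (simp add: wv_def vv_def gg_def hh_def mult.assoc)

end


lemma uniq:
  fixes d :: "nat \<Rightarrow> complex" and K :: complex and p q :: real
  assumes p: "p > 0" and q: "q > 0" and K: "norm K > p + q" and d0: "d 0 = 0"
    and rec: "\<And>n. K * d (Suc n) = of_real p * d n + of_real q * d (Suc (Suc n))"
    and bd: "\<And>n. norm (d n) \<le> M"
  shows "d n = 0"
proof -
  define \<theta> where "\<theta> = (norm K - p) / q"
  have th: "\<theta> > 1" using K q by (simp add: \<theta>_def field_simps)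
  have step: "norm (d (Suc (Suc n))) \<ge> \<theta> * norm (d (Suc n))" if "norm (d n) \<le> norm (d (Suc n))" for n
  proof -
    have "of_real q * d (Suc (Suc n)) = K * d (Suc n) - of_real p * d n" using rec[of n] by simp
    then have "q * norm (d (Suc (Suc n))) = norm (K * d (Suc n) - of_real p * d n)"
      using q by (metis norm_mult norm_of_real abs_of_pos)
    also have "\<dots> \<ge> norm (K * d (Suc n)) - norm (of_real p * d n)" by (rule norm_triangle_ineq2)
    finally have "q * norm (d (Suc (Suc n))) \<ge> norm K * norm (d (Suc n)) - p * norm (d n)"
      using p by (simp add: norm_mult)
    moreover have "p * norm (d n) \<le> p * norm (d (Suc n))" using that p by (intro mult_left_mono) auto
    ultimately have "q * norm (d (Suc (Suc n))) \<ge> (norm K - p) * norm (d (Suc n))"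
      by (simp add: algebra_simps)
    then show ?thesis using q by (simp add: \<theta>_def field_simps)
  qed
  have C: "norm (d n) \<le> norm (d (Suc n)) \<and> \<theta> ^ n * norm (d 1) \<le> norm (d (Suc n))" for n
  proof (induction n)
    case 0
    then show ?case using d0 by simp
  next
    case (Suc n)
    then have s: "norm (d (Suc (Suc n))) \<ge> \<theta> * norm (d (Suc n))" using step by blast
    have "norm (d (Suc n)) \<le> \<theta> * norm (d (Suc n))" using th by (simp add: mult_le_cancel_right1)
    moreover have "\<theta> ^ Suc n * norm (d 1) \<le> \<theta> * norm (d (Suc n))"
      using Suc th by (simp add: mult.assoc mult_left_mono)
    ultimately show ?case using s by linarith
  qed
  have d1: "d 1 = 0"
  proof (rule ccontr)
    assume "d 1 \<noteq> 0"
    then have pos: "norm (d 1) > 0" by simp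
    obtain n where "M / norm (d 1) < \<theta> ^ n" using real_arch_pow[OF th] by blast
    then have "M < \<theta> ^ n * norm (d 1)" using pos by (simp add: field_simps)
    then show False using C[of n] bd[of "Suc n"] by linarith
  qed
  have "d n = 0 \<and> d (Suc n) = 0" for n
  proof (induction n)
    case 0
    then show ?case using d0 d1 by simp
  next
    case (Suc n)
    then have "of_real q * d (Suc (Suc n)) = 0" using rec[of n] by simp
    then show ?case using Suc q by simp
  qed
  then show ?thesis by blast
qed

lemma poly_geo_bounded:
  fixes x :: complex
  assumes x: "norm x < 1"
  shows "\<exists>M. \<forall>m. norm (of_nat ((m - 1 + k) choose k) * x ^ m) \<le> M"
proof (cases "k = 0")
  case True
  then show ?thesis using x by (intro exI[of _ 1]) (auto simp: norm_power power_le_one)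
next
  case False
  then have k: "k > 0" by simp
  define y where "y = root k (norm x)"
  have y0: "y \<ge> 0" unfolding y_def by (rule real_root_ge_zero) simp
  have y1: "y < 1" using x k by (simp add: y_def)
  have yk: "y ^ k = norm x" using k by (simp add: y_def)
  have lim: "(\<lambda>m. (of_nat m * y ^ m + of_nat k * y ^ m) ^ k) \<longlonglongrightarrow> ((0 + of_nat k * 0) ^ k :: real)"
    using y0 y1 by (intro tendsto_intros powser_times_n_limit_0) auto
  then have "Bseq (\<lambda>m. (of_nat m * y ^ m + of_nat k * y ^ m) ^ k)"
    by (intro convergent_imp_Bseq) (auto simp: convergent_def)
  then obtain M where M0: "\<forall>m. norm ((of_nat m * y ^ m + of_nat k * y ^ m) ^ k) \<le> M"
    using BseqD by blast
  then have M: "\<And>m. norm ((of_nat m * y ^ m + of_nat k * y ^ m) ^ k) \<le> M" by blast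
  have "norm (of_nat ((m - 1 + k) choose k) * x ^ m) \<le> M" for m
  proof -
    have "real ((m - 1 + k) choose k) \<le> real ((m + k) ^ k)"
    proof -
      have "(m - 1 + k) choose k \<le> (m - 1 + k) ^ k" by (rule binomial_le_pow) simp
      also have "\<dots> \<le> (m + k) ^ k" by (intro power_mono) auto
      finally show ?thesis by (simp only: of_nat_le_iff)
    qed
    then have "norm (of_nat ((m - 1 + k) choose k) * x ^ m) \<le> real ((m + k) ^ k) * norm x ^ m"
      by (simp add: norm_mult norm_power mult_right_mono)
    also have "\<dots> = (of_nat m * y ^ m + of_nat k * y ^ m) ^ k"
    proof -
      have "norm x ^ m = (y ^ m) ^ k" using yk by (simp add: power_mult[symmetric] mult.commute power_mult)
      then have "real ((m + k) ^ k) * norm x ^ m = ((real m + real k) * y ^ m) ^ k"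
        by (simp add: power_mult_distrib)
      also have "(real m + real k) * y ^ m = of_nat m * y ^ m + of_nat k * y ^ m"
        by (simp add: algebra_simps)
      finally show ?thesis .
    qed
    also have "\<dots> \<le> M" using M[of m] by simp
    finally show ?thesis .
  qed
  then show ?thesis by blast
qed


context
  fixes l1 l2 m1 m2 :: real and c :: nat and \<alpha> :: complex
  assumes l1: "l1 > 0" and l2: "l2 > 0" and m1: "m1 > 0" and m2: "m2 > 0" and c: "c \<ge> 1"
    and a: "Re \<alpha> > 0"
begin

lemma res_special:
  assumes n: "n \<ge> c"
  shows "(\<alpha> + of_real (l1 + l2 + real c * m2)) * piLT l1 l2 m1 m2 c (i, n) \<alpha> =
    (if i = 0 then 0 else of_real l1 * piLT l1 l2 m1 m2 c (i - 1, n) \<alpha>)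
    + of_real l2 * piLT l1 l2 m1 m2 c (i, n - 1) \<alpha> + of_real (real c * m2) * piLT l1 l2 m1 m2 c (i, Suc n) \<alpha>"
proof -
  define \<pi> where "\<pi> = (\<lambda>x. piLT l1 l2 m1 m2 c x \<alpha>)"
  define U where "U = unif l1 l2 m1 m2 c"
  define J where "J = (\<lambda>x y. jump l1 l2 m1 m2 c x y)"
  have U: "U > 0" using unif_pos[OF l1 l2 m1 m2] by (simp add: U_def)
  obtain n' where n': "n = Suc n'" using n c by (cases n) auto
  have cn: "c - n = 0" using n by simp
  have mcn: "min c n = c" using n by simp
  define y where "y = (i, n)"
  have y0: "y \<noteq> (0, 0)" using n' by (simp add: y_def)
  have R: "(\<alpha> + of_real U) * \<pi> y = of_real U * (\<Sum>x\<in>{0..i + 1} \<times> {0..n + 1}. of_real (J x y) * \<pi> x)"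
    using resolvent[OF l1 l2 m1 m2 a y0] by (simp add: \<pi>_def U_def J_def y_def)
  define S where "S = {y, (i, n'), (i, Suc n)} \<union> (if i = 0 then {} else {(i - 1, n)})"
  have zero: "J x y = 0" if "x \<in> {0..i + 1} \<times> {0..n + 1} - S" for x
  proof -
    obtain a b where x: "x = (a, b)" by (cases x)
    have xy: "x \<noteq> y" using that by (auto simp: S_def)
    have "rate l1 l2 m1 m2 c x y = 0"
    proof (rule ccontr)
      assume nz: "rate l1 l2 m1 m2 c x y \<noteq> 0"
      then have "y \<in> nbs x" using rate_nbs[OF l1 l2 m1 m2] by blast
      then have "y = (a + 1, b) \<or> y = (a, b + 1) \<or> (a \<ge> 1 \<and> y = (a - 1, b)) \<or> (b \<ge> 1 \<and> y = (a, b - 1))"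
        using xy by (auto simp: nbs_def[OF l1 l2 m1 m2] x split: if_splits)
      moreover have "\<not> (a \<ge> 1 \<and> y = (a - 1, b))"
      proof
        assume h: "a \<ge> 1 \<and> y = (a - 1, b)"
        then obtain a' where a': "a = Suc a'" by (cases a) auto
        have "rate l1 l2 m1 m2 c x y = real (min (Suc a') (c - b)) * m1"
          using h rate_r3[OF l1 l2 m1 m2, where a=a' and b=b and c=c] by (simp add: x a')
        also have "c - b = 0" using h n by (simp add: y_def)
        finally show False using nz by simp
      qed
      ultimately have "x \<in> S" using that by (auto simp: S_def y_def x n')
      then show False using that by blast
    qed
    then show ?thesis using xy by (simp add: J_def jump_def)
  qed
  have Ssub: "S \<subseteq> {0..i + 1} \<times> {0..n + 1}" by (auto simp: S_def y_def n')
  have sumS: "(\<Sum>x\<in>{0..i + 1} \<times> {0..n + 1}. of_real (J x y) * \<pi> x) = (\<Sum>x\<in>S. of_real (J x y) * \<pi> x)"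
    using zero Ssub by (intro sum.mono_neutral_right) auto
  have Jyy: "J y y = 1 - (l1 + l2 + real c * m2) / U"
    by (simp add: J_def jump_def outrate_def U_def y_def cn mcn)
  have J1: "J (i, n') y = l2 / U"
    using rate_r2[OF l1 l2 m1 m2, where a=i and b=n' and c=c] by (simp add: J_def jump_def U_def y_def n')
  have J2: "J (i, Suc n) y = real c * m2 / U"
  proof -
    have "min c (Suc n) = c" using n by simp
    then show ?thesis using rate_r4[OF l1 l2 m1 m2, where a=i and b=n and c=c] by (simp add: J_def jump_def U_def y_def)
  qed
  have J3: "J (i - 1, n) y = l1 / U" if i0: "i \<noteq> 0"
  proof -
    obtain i' where i': "i = Suc i'" using i0 by (cases i) auto
    show ?thesis using rate_r1[OF l1 l2 m1 m2, where a=i' and b=n and c=c] by (simp add: J_def jump_def U_def y_def i')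
  qed
  define s where "s = l1 + l2 + real c * m2"
  have Jyy': "J y y = (U - s) / U" using U unfolding Jyy s_def by (simp add: field_simps)
  have U': "complex_of_real U \<noteq> 0" using U by simp
  have cU: "complex_of_real U * (complex_of_real (z / U) * w) = complex_of_real z * w" for z w
    using U' by (simp add: field_simps)
  have sumval: "(\<Sum>x\<in>S. of_real (J x y) * \<pi> x) = of_real ((U - s) / U) * \<pi> y + of_real (l2 / U) * \<pi> (i, n')
      + of_real (real c * m2 / U) * \<pi> (i, Suc n) + of_real (l1 / U) * (if i = 0 then 0 else \<pi> (i - 1, n))"
  proof (cases i)
    case 0
    have "S = {y, (i, n'), (i, Suc n)}" using 0 by (simp add: S_def)
    then show ?thesis using 0 J1 J2 Jyy' by (simp add: y_def n')
  next
    case (Suc i')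
    have "S = {y, (i, n'), (i, Suc n), (i', n)}" using Suc by (auto simp: S_def)
    then show ?thesis using Suc J1 J2 J3 Jyy' by (simp add: y_def n')
  qed
  have "(\<alpha> + of_real U) * \<pi> y = of_real U * (of_real ((U - s) / U) * \<pi> y + of_real (l2 / U) * \<pi> (i, n')
      + of_real (real c * m2 / U) * \<pi> (i, Suc n) + of_real (l1 / U) * (if i = 0 then 0 else \<pi> (i - 1, n)))"
    using R sumS sumval by simp
  also have "\<dots> = of_real (U - s) * \<pi> y + of_real l2 * \<pi> (i, n')
      + of_real (real c * m2) * \<pi> (i, Suc n) + of_real l1 * (if i = 0 then 0 else \<pi> (i - 1, n))"
    by (simp only: distrib_left cU)
  finally have fin: "(\<alpha> + of_real U) * \<pi> y = of_real (U - s) * \<pi> y + of_real l2 * \<pi> (i, n')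
      + of_real (real c * m2) * \<pi> (i, Suc n) + of_real l1 * (if i = 0 then 0 else \<pi> (i - 1, n))" .
  then have fin2: "(\<alpha> + of_real s) * \<pi> y = of_real l2 * \<pi> (i, n')
      + of_real (real c * m2) * \<pi> (i, Suc n) + of_real l1 * (if i = 0 then 0 else \<pi> (i - 1, n))"
    by (simp add: algebra_simps)
  show ?thesis
  proof (cases "i = 0")
    case True
    then show ?thesis using fin2 by (simp add: \<pi>_def y_def n' s_def)
  next
    case False
    then show ?thesis using fin2 by (simp add: \<pi>_def y_def n' s_def algebra_simps)
  qed
qed

end


context
  fixes l1 l2 m1 m2 :: real and c :: nat and \<alpha> :: complex
  assumes l1: "l1 > 0" and l2: "l2 > 0" and m1: "m1 > 0" and m2: "m2 > 0" and c: "c \<ge> 1"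
    and a: "Re \<alpha> > 0"
begin

lemma main_ff:
  defines "p \<equiv> (\<lambda>x. piLT l1 l2 m1 m2 c x \<alpha>)"
  shows "p (i, c - 1 + m) = ff (r2 l1 l2 m2 c \<alpha>) (R1 l1 l2 m2 c \<alpha>) (R2 l1 l2 m2 c \<alpha>) p c i m"
proof -
  define r where "r = r2 l1 l2 m2 c \<alpha>"
  define A1 where "A1 = R1 l1 l2 m2 c \<alpha>"
  define A2 where "A2 = R2 l1 l2 m2 c \<alpha>"
  define K where "K = \<alpha> + of_real (l1 + l2 + real c * m2)"
  define q where "q = (of_real (real c * m2) :: complex)"
  have qqe: "qq m2 c = real c * m2" using qq_def[OF l1 l2 m2 c a] .
  have H1: "K * r = of_real l2 + q * r^2"
    using r_root[OF l1 l2 m2 c a] unfolding KK_def[OF l1 l2 m2 c a] qqe by (simp add: K_def q_def r_def)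
  have H2: "r \<noteq> 0" using r_nz[OF l1 l2 m2 c a] by (simp add: r_def)
  have H3: "q * r = of_real l2 / r * A2" using B_eq[OF l1 l2 m2 c a] unfolding qqe by (simp add: q_def r_def A2_def)
  have H4: "A1 * (1 - A2) * (of_real l2 / r - q * r) = of_real l1"
    using R_ident[OF l1 l2 m2 c a] unfolding qqe by (simp add: q_def r_def A2_def A1_def)
  note Lff = L_ff[OF H1 H2 H3 H4]
  have rs: "norm r < 1" using r_small[OF l1 l2 m2 c a] by (simp add: r_def)
  have "\<forall>k. \<exists>M. \<forall>m. norm (of_nat ((m - 1 + k) choose k) * r ^ m) \<le> M"
    using poly_geo_bounded[OF rs] by blast
  then obtain Mf where Mf: "\<And>k m. norm (of_nat ((m - 1 + k) choose k) * r ^ m) \<le> Mf k"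
    using choice by metis
  define PB where "PB = 1 / (norm (\<alpha> + of_real (unif l1 l2 m1 m2 c)) - unif l1 l2 m1 m2 c)"
  have PB: "norm (p x) \<le> PB" for x using piLT_bound[OF l1 l2 m1 m2 a] by (simp add: p_def PB_def)
  have FB: "norm (ff r A1 A2 p c i m) \<le> norm (vseq p A1 A2 c i 0) + (\<Sum>k=0..i. norm (vseq p A1 A2 c i k * (1 - A2) ^ k) * Mf k)"
    for i m
  proof (cases m)
    case 0
    have "0 \<le> (\<Sum>k=0..i. norm (vseq p A1 A2 c i k * (1 - A2) ^ k) * Mf k)"
    proof (intro sum_nonneg mult_nonneg_nonneg)
      fix k show "0 \<le> Mf k" using Mf[of 0 k] norm_ge_zero order_trans by blast
    qed simp
    then show ?thesis using 0 ff_0[OF H1 H2 H3 H4, of p c i] by simp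
  next
    case (Suc m')
    have "norm (ff r A1 A2 p c i m) = norm (\<Sum>k=0..i. (vseq p A1 A2 c i k * (1 - A2) ^ k) *
        (of_nat ((Suc m' - 1 + k) choose k) * r ^ Suc m'))"
      unfolding Suc ff_Suc[OF H1 H2 H3 H4] by (simp add: mult.assoc)
    also have "\<dots> \<le> (\<Sum>k=0..i. norm (vseq p A1 A2 c i k * (1 - A2) ^ k) * Mf k)"
      by (rule order_trans[OF norm_sum sum_mono], subst norm_mult, rule mult_left_mono[OF Mf norm_ge_zero])
    finally show ?thesis by (simp add: add_increasing)
  qed
  have vs0: "vseq p A1 A2 c i 0 = p (i, c - 1)" for i by (cases i) auto
  have Kn: "norm K > l2 + real c * m2"
  proof -
    have "norm K \<ge> Re K" by (rule complex_Re_le_cmod)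
    then show ?thesis using a l1 by (simp add: K_def)
  qed
  show ?thesis
  proof (induction i arbitrary: m)
    case (0 m)
    define d where "d = (\<lambda>m. p (0, c - 1 + m) - ff r A1 A2 p c 0 m)"
    have "d m = 0"
    proof (rule uniq[where K = K and p = l2 and q = "real c * m2" and M = "PB + (norm (vseq p A1 A2 c 0 0) + (\<Sum>k=0..0. norm (vseq p A1 A2 c 0 k * (1 - A2) ^ k) * Mf k))"])
      show "d 0 = 0" using ff_0[OF H1 H2 H3 H4, of p c 0] vs0[of 0] by (simp add: d_def)
    next
      fix n
      have RS: "K * p (0, c - 1 + Suc n) = of_real l2 * p (0, c - 1 + n) + q * p (0, c - 1 + Suc (Suc n))"
      proof -
        have e1: "c - 1 + Suc n - 1 = c - 1 + n" "Suc (c - 1 + Suc n) = c - 1 + Suc (Suc n)" by simp_all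
        show ?thesis using res_special[OF l1 l2 m1 m2 c a, of "c - 1 + Suc n" 0] c
          unfolding e1 by (simp add: K_def q_def p_def)
      qed
      have LF: "K * ff r A1 A2 p c 0 (Suc n) = of_real l2 * ff r A1 A2 p c 0 n + q * ff r A1 A2 p c 0 (Suc (Suc n))"
        using Lff[of p c 0 n] by (simp add: algebra_simps)
      show "K * d (Suc n) = of_real l2 * d n + of_real (real c * m2) * d (Suc (Suc n))"
        using RS LF by (simp add: d_def q_def algebra_simps)
    next
      fix n show "norm (d n) \<le> PB + (norm (vseq p A1 A2 c 0 0) + (\<Sum>k=0..0. norm (vseq p A1 A2 c 0 k * (1 - A2) ^ k) * Mf k))"
      proof -
        have "norm (d n) \<le> norm (p (0, c - 1 + n)) + norm (ff r A1 A2 p c 0 n)"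
          unfolding d_def by (rule norm_triangle_ineq4)
        then show ?thesis using PB[of "(0, c - 1 + n)"] FB[of 0 n] by linarith
      qed
    qed (use l2 c m2 Kn in auto)
    then show ?case by (simp add: d_def r_def A1_def A2_def)
  next
    case (Suc i m)
    define d where "d = (\<lambda>m. p (Suc i, c - 1 + m) - ff r A1 A2 p c (Suc i) m)"
    have "d m = 0"
    proof (rule uniq[where K = K and p = l2 and q = "real c * m2" and M = "PB + (norm (vseq p A1 A2 c (Suc i) 0) + (\<Sum>k=0..Suc i. norm (vseq p A1 A2 c (Suc i) k * (1 - A2) ^ k) * Mf k))"])
      show "d 0 = 0" using ff_0[OF H1 H2 H3 H4, of p c "Suc i"] vs0[of "Suc i"] by (simp add: d_def)
    next
      fix n
      have RS: "K * p (Suc i, c - 1 + Suc n) = of_real l1 * p (i, c - 1 + Suc n) + of_real l2 * p (Suc i, c - 1 + n) + q * p (Suc i, c - 1 + Suc (Suc n))"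
      proof -
        have e1: "c - 1 + Suc n - 1 = c - 1 + n" "Suc (c - 1 + Suc n) = c - 1 + Suc (Suc n)" by simp_all
        show ?thesis using res_special[OF l1 l2 m1 m2 c a, of "c - 1 + Suc n" "Suc i"] c
          unfolding e1 by (simp add: K_def q_def p_def)
      qed
      have LF: "K * ff r A1 A2 p c (Suc i) (Suc n) = of_real l1 * ff r A1 A2 p c i (Suc n) + of_real l2 * ff r A1 A2 p c (Suc i) n + q * ff r A1 A2 p c (Suc i) (Suc (Suc n))"
        using Lff[of p c "Suc i" n] by (simp add: algebra_simps)
      show "K * d (Suc n) = of_real l2 * d n + of_real (real c * m2) * d (Suc (Suc n))"
        using RS LF Suc.IH[of "Suc n", folded r_def A1_def A2_def] by (simp add: d_def q_def algebra_simps)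
    next
      fix n show "norm (d n) \<le> PB + (norm (vseq p A1 A2 c (Suc i) 0) + (\<Sum>k=0..Suc i. norm (vseq p A1 A2 c (Suc i) k * (1 - A2) ^ k) * Mf k))"
      proof -
        have "norm (d n) \<le> norm (p (Suc i, c - 1 + n)) + norm (ff r A1 A2 p c (Suc i) n)"
          unfolding d_def by (rule norm_triangle_ineq4)
        then show ?thesis using PB[of "(Suc i, c - 1 + n)"] FB[of "Suc i" n] by linarith
      qed
    qed (use l2 c m2 Kn in auto)
    then show ?case by (simp add: d_def r_def A1_def A2_def)
  qed
qed

end

theorem theorem2:
  fixes l1 l2 m1 m2 :: real and c :: nat and \<alpha> :: complex and i j :: nat
  assumes "c \<ge> 1" and "l1 > 0" and "l2 > 0" and "m1 > 0" and "m2 > 0"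
    and "Re \<alpha> > 0" and "j \<ge> 1"
  shows "piLT l1 l2 m1 m2 c (i, c - 1 + j) \<alpha> =
    (\<Sum>k = 0..i. vseq (\<lambda>x. piLT l1 l2 m1 m2 c x \<alpha>) (R1 l1 l2 m2 c \<alpha>) (R2 l1 l2 m2 c \<alpha>) c i k
       * (1 - R2 l1 l2 m2 c \<alpha>) ^ k * of_nat ((j - 1 + k) choose k) * (r2 l1 l2 m2 c \<alpha>) ^ j)"
proof -
  note c = assms(1) and l1 = assms(2) and l2 = assms(3) and m1 = assms(4) and m2 = assms(5) and a = assms(6)
  obtain m where j: "j = Suc m" using assms(7) by (cases j) auto
  define p where "p = (\<lambda>x. piLT l1 l2 m1 m2 c x \<alpha>)"
  define r where "r = r2 l1 l2 m2 c \<alpha>"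
  define A1 where "A1 = R1 l1 l2 m2 c \<alpha>"
  define A2 where "A2 = R2 l1 l2 m2 c \<alpha>"
  define K where "K = \<alpha> + of_real (l1 + l2 + real c * m2)"
  define q where "q = (of_real (real c * m2) :: complex)"
  have qqe: "qq m2 c = real c * m2" using qq_def[OF l1 l2 m2 c a] .
  have H1: "K * r = of_real l2 + q * r^2"
    using r_root[OF l1 l2 m2 c a] unfolding KK_def[OF l1 l2 m2 c a] qqe by (simp add: K_def q_def r_def)
  have H2: "r \<noteq> 0" using r_nz[OF l1 l2 m2 c a] by (simp add: r_def)
  have H3: "q * r = of_real l2 / r * A2" using B_eq[OF l1 l2 m2 c a] unfolding qqe by (simp add: q_def r_def A2_def)
  have H4: "A1 * (1 - A2) * (of_real l2 / r - q * r) = of_real l1"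
    using R_ident[OF l1 l2 m2 c a] unfolding qqe by (simp add: q_def r_def A2_def A1_def)
  have "p (i, c - 1 + j) = ff r A1 A2 p c i (Suc m)"
    using main_ff[OF l1 l2 m1 m2 c a, of i j] unfolding j by (simp add: p_def r_def A1_def A2_def)
  also have "\<dots> = (\<Sum>k=0..i. vseq p A1 A2 c i k * (1 - A2) ^ k * of_nat ((Suc m - 1 + k) choose k) * r ^ Suc m)"
    by (rule ff_Suc[OF H1 H2 H3 H4])
  finally show ?thesis by (simp add: j p_def r_def A1_def A2_def)
qed


end
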